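(* Let $\Omega\subseteq\mathbb{R}^n$ be open, $u\colon\Omega\to\mathbb{R}^m$ Borel measurable, and $(P_\xi)_{\xi\in\mathbb{S}^{n-1}}$ a family of curvilinear projections on $\Omega$. Then for every $\xi\in\mathbb{S}^{n-1}$ the set $J_{\hat u_\xi}$ is Borel, and the set $A_{\hat u}\subseteq\Omega\times\mathbb{S}^{n-1}$ is Borel.
   Context: $F\in C^\infty(\mathbb{R}^n\times\mathbb{R}^n;\mathbb{R}^n)$ with $F(x,\alpha v)=\alpha^2F(x,v)$, and $g\in C(\Omega\times\mathbb{R}^n;\mathbb{R}^m)$ are fixed. Transversality: with $S_i=\{\xi\in\mathbb{S}^{n-1}:|\xi\cdot e_i|\ge1/\sqrt n\}$, a family of Lipschitz maps $P_\xi\colon\Omega\to\xi^\perp$ is transversal on $\Omega$ if for every $i$, with $P^i_\xi=\pi_{e_i}\circ P_\xi$ ($\pi_{e_i}$ orthogonal projection onto $e_i^\perp$), $T^i_{xx'}(\xi)=(P^i_\xi(x)-P^i_\xi(x'))/|x-x'|$: (H1) $\xi\mapsto P^i_\xi(x)$ is $C^2$ on $S_i$ with $\sup_{S_i\times\Omega}|D^j_\xi P^i_\xi(x)|<\infty$, $j=1,2$; (H2) there is $C'>0$ with $|T^i_{xx'}(\xi)|\le C'\Rightarrow|\mathrm{J}_\xi T^i_{xx'}(\xi)|\ge C'$; (H3) $|D^j_\xi T^i_{xx'}(\xi)|\le C''$, $j=1,2$. Family of curvilinear projections: there exist $\rho,\tau>0$, open $A\subseteq\mathbb{R}^n\times\mathbb{S}^{n-1}$,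 smooth Lipschitz $\varphi\colon A\to\mathbb{R}^n$ with $A_\xi=\{y+t\xi:y\in\xi^\perp\cap\mathrm{B}_\rho(0),t\in(-\tau,\tau)\}$ such that, with $\varphi_\xi=\varphi(\cdot,\xi)$: $\Omega\subseteq\varphi_\xi(A_\xi)$; $\varphi_\xi^{-1}|_\Omega$ is a bi-Lipschitz diffeomorphism onto its image; $P_\xi(\varphi_\xi(y+t\xi))=y$ whenever $y+t\xi\in\varphi_\xi^{-1}(\Omega)$; each $P_\xi$ smooth Lipschitz with $\ddot\varphi_\xi=F(\varphi_\xi,\dot\varphi_\xi)$ ($t$-derivatives); transversal; and for each $x$, $\xi\mapsto\xi_\varphi(x)/|\xi_\varphi(x)|$ is a diffeomorphism of $\mathbb{S}^{n-1}$, where $t^\xi_x=\varphi_\xi^{-1}(x)\cdot\xi$ and $\xi_\varphi(x)=\dot\varphi_\xi(P_\xi(x)+t^\xi_x\xi)$. Slices: $\hat u^\xi_y(t)=u(\varphi_\xi(y+t\xi))\cdot g(\varphi_\xi(y+t\xi),\dot\varphi_\xi(y+t\xi))$ for $t$ with $\varphi_\xi(y+t\xi)\in\Omega$. For a function $f$ of one real variable, $J_f$ is the set of $t$ where the right and left approximate limits of $f$ exist in $\mathbb{R}$ and differ. Directional jump set: $J_{\hat u_\xi}:=\{x\in\Omega:t^\xi_x\in J_{\hat u^\xi_{P_\xi(x)}}\}$, and $A_{\hat u}:=\{(x,\xi)\in\Omega\times\mathbb{S}^{n-1}:x\in J_{\hat u_\xi}\}$. *)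

theory Defs
  imports "HOL-Analysis.Analysis"
begin

fun dderivs :: "('a::real_normed_vector \<Rightarrow> 'b::real_normed_vector) \<Rightarrow> 'a set \<Rightarrow> 'a list \<Rightarrow> 'a \<Rightarrow> 'b" where
  "dderivs f S [] = f"
| "dderivs f S (v # vs) = (\<lambda>x. frechet_derivative (dderivs f S vs) (at x within S) v)"

text \<open>C^k on a set (used on open sets and on closed-interior cones, where
  derivatives within the set are unique).\<close>
definition Ck_on :: "nat \<Rightarrow> 'a::real_normed_vector set \<Rightarrow> ('a \<Rightarrow> 'b::real_normed_vector) \<Rightarrow> bool" where
  "Ck_on k S f \<longleftrightarrow>
     (\<forall>vs. length vs < k \<longrightarrow> dderivs f S vs differentiable_on S) \<and>
     (\<forall>vs. length vs \<le> k \<longrightarrow> continuous_on S (dderivs f S vs))"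

definition Cinf_on :: "'a::real_normed_vector set \<Rightarrow> ('a \<Rightarrow> 'b::real_normed_vector) \<Rightarrow> bool" where
  "Cinf_on S f \<longleftrightarrow> (\<forall>k. Ck_on k S f)"

definition smooth_mfd :: "'a::real_normed_vector set \<Rightarrow> ('a \<Rightarrow> 'b::real_normed_vector) \<Rightarrow> bool" where
  "smooth_mfd S f \<longleftrightarrow>
     (\<forall>p\<in>S. \<exists>U h. open U \<and> p \<in> U \<and> Cinf_on U h \<and> (\<forall>q\<in>U \<inter> S. h q = f q))"

definition sphere_diffeo :: "(real^'n \<Rightarrow> real^'n) \<Rightarrow> bool" where
  "sphere_diffeo f \<longleftrightarrow> bij_betw f (sphere 0 1) (sphere 0 1) \<and>
     smooth_mfd (sphere 0 1) f \<and> smooth_mfd (sphere 0 1) (inv_into (sphere 0 1) f)"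

definition perp :: "'a::real_inner \<Rightarrow> 'a set" where
  "perp \<xi> = {y. y \<bullet> \<xi> = 0}"

definition proj_perp :: "'a::real_inner \<Rightarrow> 'a \<Rightarrow> 'a" where
  "proj_perp e v = v - (v \<bullet> e) *\<^sub>R e"

definition Acyl :: "real \<Rightarrow> real \<Rightarrow> 'a::real_inner \<Rightarrow> 'a set" where
  "Acyl \<rho> \<tau> \<xi> = {y + t *\<^sub>R \<xi> | y t. y \<in> perp \<xi> \<and> norm y < \<rho> \<and> \<bar>t\<bar> < \<tau>}"

definition Scap :: "'n::finite \<Rightarrow> (real^'n) set" where
  "Scap i = {\<xi> \<in> sphere 0 1. \<bar>\<xi> $ i\<bar> \<ge> 1 / sqrt (real CARD('n))}"

definition Scone :: "'n::finite \<Rightarrow> (real^'n) set" where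
  "Scone i = {\<eta>. \<eta> \<noteq> 0 \<and> (1 / norm \<eta>) *\<^sub>R \<eta> \<in> Scap i}"

definition hom0 :: "(real^'n \<Rightarrow> 'b) \<Rightarrow> real^'n \<Rightarrow> 'b" where
  "hom0 f \<eta> = f ((1 / norm \<eta>) *\<^sub>R \<eta>)"

text \<open>Absolute value of the Jacobian of f : S_i -> e_i^perp at xi
  (intrinsic, computed through the 0-homogeneous extension).\<close>
definition absJac :: "'n::finite \<Rightarrow> (real^'n \<Rightarrow> real^'n) \<Rightarrow> real^'n \<Rightarrow> real" where
  "absJac i f \<xi> = \<bar>det (matrix (\<lambda>v.
      frechet_derivative (hom0 f) (at \<xi> within Scone i) (v - (v \<bullet> \<xi>) *\<^sub>R \<xi>)
      + (v \<bullet> \<xi>) *\<^sub>R axis i 1))\<bar>"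

definition transversal :: "(real^'n::finite) set \<Rightarrow> (real^'n \<Rightarrow> real^'n \<Rightarrow> real^'n) \<Rightarrow> bool" where
  "transversal \<Omega> P \<longleftrightarrow> (\<forall>i::'n.
     let Pi = (\<lambda>\<xi> x. proj_perp (axis i 1) (P \<xi> x));
         T = (\<lambda>x x' \<xi>. (1 / norm (x - x')) *\<^sub>R (Pi \<xi> x - Pi \<xi> x'))
     in
     \<comment> \<open>(H1)\<close>
     (\<forall>x\<in>\<Omega>. Ck_on 2 (Scone i) (hom0 (\<lambda>\<xi>. Pi \<xi> x))) \<and>
     (\<exists>C. \<forall>x\<in>\<Omega>. \<forall>\<xi>\<in>Scap i. \<forall>vs. 1 \<le> length vs \<and> length vs \<le> 2 \<longrightarrow>
         norm (dderivs (hom0 (\<lambda>\<xi>. Pi \<xi> x)) (Scone i) vs \<xi>) \<le> C * prod_list (map norm vs)) \<and>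
     \<comment> \<open>(H2)\<close>
     (\<exists>C'>0. \<forall>x\<in>\<Omega>. \<forall>x'\<in>\<Omega>. x \<noteq> x' \<longrightarrow> (\<forall>\<xi>\<in>Scap i.
         norm (T x x' \<xi>) \<le> C' \<longrightarrow> absJac i (T x x') \<xi> \<ge> C')) \<and>
     \<comment> \<open>(H3)\<close>
     (\<exists>C''. \<forall>x\<in>\<Omega>. \<forall>x'\<in>\<Omega>. x \<noteq> x' \<longrightarrow> (\<forall>\<xi>\<in>Scap i. \<forall>vs. 1 \<le> length vs \<and> length vs \<le> 2 \<longrightarrow>
         norm (dderivs (hom0 (T x x')) (Scone i) vs \<xi>) \<le> C'' * prod_list (map norm vs))))"

definition phidot :: "((real^'n) \<times> (real^'n) \<Rightarrow> real^'n) \<Rightarrow> real^'n \<Rightarrow> real^'n \<Rightarrow> real^'n" where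
  "phidot phi \<xi> z = vector_derivative (\<lambda>t. phi (z + t *\<^sub>R \<xi>, \<xi>)) (at 0)"

definition phiddot :: "((real^'n) \<times> (real^'n) \<Rightarrow> real^'n) \<Rightarrow> real^'n \<Rightarrow> real^'n \<Rightarrow> real^'n" where
  "phiddot phi \<xi> z = vector_derivative (\<lambda>t. phidot phi \<xi> (z + t *\<^sub>R \<xi>)) (at 0)"

definition phiinv :: "real \<Rightarrow> real \<Rightarrow> ((real^'n) \<times> (real^'n) \<Rightarrow> real^'n) \<Rightarrow> real^'n \<Rightarrow> real^'n \<Rightarrow> real^'n" where
  "phiinv \<rho> \<tau> phi \<xi> = inv_into (Acyl \<rho> \<tau> \<xi>) (\<lambda>z. phi (z, \<xi>))"

definition tx :: "real \<Rightarrow> real \<Rightarrow> ((real^'n) \<times> (real^'n) \<Rightarrow> real^'n) \<Rightarrow> real^'n \<Rightarrow> real^'n \<Rightarrow> real" where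
  "tx \<rho> \<tau> phi \<xi> x = phiinv \<rho> \<tau> phi \<xi> x \<bullet> \<xi>"

definition xi_phi :: "real \<Rightarrow> real \<Rightarrow> ((real^'n) \<times> (real^'n) \<Rightarrow> real^'n) \<Rightarrow> (real^'n \<Rightarrow> real^'n \<Rightarrow> real^'n)
     \<Rightarrow> real^'n \<Rightarrow> real^'n \<Rightarrow> real^'n" where
  "xi_phi \<rho> \<tau> phi P x \<xi> = phidot phi \<xi> (P \<xi> x + tx \<rho> \<tau> phi \<xi> x *\<^sub>R \<xi>)"

definition curvilinear_projections ::
  "(real^'n \<Rightarrow> real^'n \<Rightarrow> real^'n) \<Rightarrow> (real^'n::finite) set \<Rightarrow> (real^'n \<Rightarrow> real^'n \<Rightarrow> real^'n)
   \<Rightarrow> real \<Rightarrow> real \<Rightarrow> ((real^'n) \<times> (real^'n)) set \<Rightarrow> ((real^'n) \<times> (real^'n) \<Rightarrow> real^'n) \<Rightarrow> bool" where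
  "curvilinear_projections F \<Omega> P \<rho> \<tau> A phi \<longleftrightarrow>
     \<rho> > 0 \<and> \<tau> > 0 \<and>
     A \<subseteq> UNIV \<times> sphere 0 1 \<and> openin (top_of_set (UNIV \<times> sphere 0 1)) A \<and>
     (\<forall>\<xi>\<in>sphere 0 1. {z. (z, \<xi>) \<in> A} = Acyl \<rho> \<tau> \<xi>) \<and>
     smooth_mfd A phi \<and> (\<exists>L. L-lipschitz_on A phi) \<and>
     (\<forall>\<xi>\<in>sphere 0 1.
        \<Omega> \<subseteq> (\<lambda>z. phi (z, \<xi>)) ` Acyl \<rho> \<tau> \<xi> \<and>
        inj_on (\<lambda>z. phi (z, \<xi>)) {z \<in> Acyl \<rho> \<tau> \<xi>. phi (z, \<xi>) \<in> \<Omega>} \<and>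
        (\<exists>L>0. \<forall>x\<in>\<Omega>. \<forall>x'\<in>\<Omega>.
            dist x x' \<le> L * dist (phiinv \<rho> \<tau> phi \<xi> x) (phiinv \<rho> \<tau> phi \<xi> x') \<and>
            dist (phiinv \<rho> \<tau> phi \<xi> x) (phiinv \<rho> \<tau> phi \<xi> x') \<le> L * dist x x') \<and>
        Cinf_on \<Omega> (phiinv \<rho> \<tau> phi \<xi>) \<and>
        smooth_mfd (phiinv \<rho> \<tau> phi \<xi> ` \<Omega>) (\<lambda>z. phi (z, \<xi>)) \<and>
        (\<forall>y t. y \<in> perp \<xi> \<and> norm y < \<rho> \<and> \<bar>t\<bar> < \<tau> \<and> phi (y + t *\<^sub>R \<xi>, \<xi>) \<in> \<Omega> \<longrightarrow>
            P \<xi> (phi (y + t *\<^sub>R \<xi>, \<xi>)) = y) \<and>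
        (\<forall>x\<in>\<Omega>. P \<xi> x \<in> perp \<xi>) \<and> Cinf_on \<Omega> (P \<xi>) \<and> (\<exists>L. L-lipschitz_on \<Omega> (P \<xi>)) \<and>
        (\<forall>z\<in>Acyl \<rho> \<tau> \<xi>. phiddot phi \<xi> z = F (phi (z, \<xi>)) (phidot phi \<xi> z))) \<and>
     transversal \<Omega> P \<and>
     (\<forall>x\<in>\<Omega>. sphere_diffeo (\<lambda>\<xi>. (1 / norm (xi_phi \<rho> \<tau> phi P x \<xi>)) *\<^sub>R xi_phi \<rho> \<tau> phi P x \<xi>))"

definition slice :: "(real^'n \<Rightarrow> real^'m) \<Rightarrow> (real^'n \<Rightarrow> real^'n \<Rightarrow> real^'m) \<Rightarrow> ((real^'n) \<times> (real^'n) \<Rightarrow> real^'n)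
     \<Rightarrow> real^'n \<Rightarrow> real^'n \<Rightarrow> real \<Rightarrow> real" where
  "slice u g phi \<xi> y t =
     u (phi (y + t *\<^sub>R \<xi>, \<xi>)) \<bullet> g (phi (y + t *\<^sub>R \<xi>, \<xi>)) (phidot phi \<xi> (y + t *\<^sub>R \<xi>))"

definition aplim_right :: "(real \<Rightarrow> real) \<Rightarrow> real \<Rightarrow> real \<Rightarrow> bool" where
  "aplim_right f t a \<longleftrightarrow> (\<forall>\<epsilon>>0.
     ((\<lambda>r. measure lebesgue {s. t < s \<and> s < t + r \<and> \<bar>f s - a\<bar> > \<epsilon>} / r) \<longlongrightarrow> 0) (at_right 0))"

definition aplim_left :: "(real \<Rightarrow> real) \<Rightarrow> real \<Rightarrow> real \<Rightarrow> bool" where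
  "aplim_left f t a \<longleftrightarrow> (\<forall>\<epsilon>>0.
     ((\<lambda>r. measure lebesgue {s. t - r < s \<and> s < t \<and> \<bar>f s - a\<bar> > \<epsilon>} / r) \<longlongrightarrow> 0) (at_right 0))"

definition jumpset :: "(real \<Rightarrow> real) \<Rightarrow> real set" where
  "jumpset f = {t. \<exists>a b. aplim_right f t a \<and> aplim_left f t b \<and> a \<noteq> b}"

definition dirjump :: "(real^'n) set \<Rightarrow> (real^'n \<Rightarrow> real^'m) \<Rightarrow> (real^'n \<Rightarrow> real^'n \<Rightarrow> real^'m)
     \<Rightarrow> (real^'n \<Rightarrow> real^'n \<Rightarrow> real^'n) \<Rightarrow> real \<Rightarrow> real \<Rightarrow> ((real^'n) \<times> (real^'n) \<Rightarrow> real^'n)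
     \<Rightarrow> real^'n \<Rightarrow> (real^'n) set" where
  "dirjump \<Omega> u g P \<rho> \<tau> phi \<xi> =
     {x \<in> \<Omega>. tx \<rho> \<tau> phi \<xi> x \<in> jumpset (slice u g phi \<xi> (P \<xi> x))}"

definition Ahat :: "(real^'n) set \<Rightarrow> (real^'n \<Rightarrow> real^'m) \<Rightarrow> (real^'n \<Rightarrow> real^'n \<Rightarrow> real^'m)
     \<Rightarrow> (real^'n \<Rightarrow> real^'n \<Rightarrow> real^'n) \<Rightarrow> real \<Rightarrow> real \<Rightarrow> ((real^'n) \<times> (real^'n) \<Rightarrow> real^'n)
     \<Rightarrow> ((real^'n) \<times> (real^'n)) set" where
  "Ahat \<Omega> u g P \<rho> \<tau> phi =
     {(x, \<xi>). x \<in> \<Omega> \<and> \<xi> \<in> sphere 0 1 \<and> x \<in> dirjump \<Omega> u g P \<rho> \<tau> phi \<xi>}"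

end

theory Submission
  imports Defs
begin

definition dzs :: "(real \<Rightarrow> real set) \<Rightarrow> real set \<Rightarrow> bool" where
  "dzs I S \<longleftrightarrow> ((\<lambda>r. measure lborel (I r \<inter> S) / r) \<longlongrightarrow> 0) (at_right 0)"

definition goodI :: "(real \<Rightarrow> real set) \<Rightarrow> bool" where
  "goodI I \<longleftrightarrow> (\<forall>r>0. I r \<in> sets borel \<and> measure lborel (I r) = r \<and> emeasure lborel (I r) < \<infinity>)
      \<and> (\<forall>r r'. 0 < r \<and> r \<le> r' \<longrightarrow> I r \<subseteq> I r')"

lemma goodI_fm: "goodI I \<Longrightarrow> r > 0 \<Longrightarrow> I r \<inter> S \<in> sets borel \<Longrightarrow> I r \<inter> S \<in> fmeasurable lborel"
proof -
  assume I: "goodI I" and r: "r > 0" and S: "I r \<inter> S \<in> sets borel"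
  have "I r \<in> fmeasurable lborel" using I r by (intro fmeasurableI) (auto simp: goodI_def)
  then show ?thesis by (rule fmeasurableI2) (use S in auto)
qed

lemma dzs_mono:
  assumes I: "goodI I" and T: "T \<in> sets borel" and S: "S \<in> sets borel" and ST: "S \<subseteq> T" and d: "dzs I T"
  shows "dzs I S"
  unfolding dzs_def
proof (rule real_tendsto_sandwich[OF _ _ tendsto_const d[unfolded dzs_def]])
  show "\<forall>\<^sub>F r in at_right 0. 0 \<le> measure lborel (I r \<inter> S) / r"
    by (simp add: eventually_at_right_field) (meson zero_less_one)
  show "\<forall>\<^sub>F r in at_right 0. measure lborel (I r \<inter> S) / r \<le> measure lborel (I r \<inter> T) / r"
    unfolding eventually_at_right_field
  proof (intro exI[of _ 1] conjI allI impI)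
    fix r :: real assume r: "0 < r"
    have IT: "I r \<inter> T \<in> fmeasurable lborel" using goodI_fm[OF I r] I T r unfolding goodI_def by blast
    have "measure lborel (I r \<inter> S) \<le> measure lborel (I r \<inter> T)"
      by (rule measure_mono_fmeasurable) (use ST I S r IT in \<open>auto simp: goodI_def\<close>)
    then show "measure lborel (I r \<inter> S) / r \<le> measure lborel (I r \<inter> T) / r"
      using r by (simp add: divide_right_mono)
  qed simp
qed

lemma dzs_Un:
  assumes I: "goodI I" and T: "T \<in> sets borel" and S: "S \<in> sets borel" and dS: "dzs I S" and dT: "dzs I T"
  shows "dzs I (S \<union> T)"
proof -
  have lim: "((\<lambda>r. measure lborel (I r \<inter> S) / r + measure lborel (I r \<inter> T) / r) \<longlongrightarrow> 0) (at_right 0)"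
    using tendsto_add_zero[OF dS[unfolded dzs_def] dT[unfolded dzs_def]] .
  show ?thesis unfolding dzs_def
proof (rule real_tendsto_sandwich[OF _ _ tendsto_const lim])
  show "\<forall>\<^sub>F r in at_right 0. 0 \<le> measure lborel (I r \<inter> (S \<union> T)) / r"
    by (simp add: eventually_at_right_field) (meson zero_less_one)
  show "\<forall>\<^sub>F r in at_right 0. measure lborel (I r \<inter> (S \<union> T)) / r
      \<le> measure lborel (I r \<inter> S) / r + measure lborel (I r \<inter> T) / r"
    unfolding eventually_at_right_field
  proof (intro exI[of _ 1] conjI allI impI)
    fix r :: real assume r: "0 < r"
    have "measure lborel (I r \<inter> (S \<union> T)) \<le> measure lborel (I r \<inter> S) + measure lborel (I r \<inter> T)"
      by (metis Int_Un_distrib measure_Un_le I S T r goodI_def sets.Int sets_lborel)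
    then show "measure lborel (I r \<inter> (S \<union> T)) / r \<le> measure lborel (I r \<inter> S) / r + measure lborel (I r \<inter> T) / r"
      using r by (simp add: divide_right_mono add_divide_distrib[symmetric])
  qed simp
qed
qed

lemma dzs_cover:
  assumes I: "goodI I" and T: "T \<in> sets borel" and S: "S \<in> sets borel" and dS: "dzs I S" and dT: "dzs I T"
    and U: "S \<union> T = UNIV"
  shows False
proof -
  have lim: "((\<lambda>r. measure lborel (I r \<inter> S) / r + measure lborel (I r \<inter> T) / r) \<longlongrightarrow> 0 + 0) (at_right 0)"
    by (rule tendsto_add[OF dS[unfolded dzs_def] dT[unfolded dzs_def]])
  have ev: "\<forall>\<^sub>F r in at_right 0. 1 \<le> measure lborel (I r \<inter> S) / r + measure lborel (I r \<inter> T) / r"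
    unfolding eventually_at_right_field
  proof (intro exI[of _ 1] conjI allI impI)
    fix r :: real assume r: "0 < r"
    have "r = measure lborel (I r \<inter> (S \<union> T))" using U I r by (simp add: goodI_def)
    also have "\<dots> \<le> measure lborel (I r \<inter> S) + measure lborel (I r \<inter> T)"
      by (metis Int_Un_distrib measure_Un_le I S T r goodI_def sets.Int sets_lborel)
    finally show "1 \<le> measure lborel (I r \<inter> S) / r + measure lborel (I r \<inter> T) / r"
      using r by (simp add: add_divide_distrib[symmetric] le_divide_eq)
  qed simp
  have "1 \<le> (0::real) + 0"
    by (rule tendsto_lowerbound[OF lim ev]) simp
  then show False by simp
qed

locale dfam =
  fixes D :: "real set \<Rightarrow> bool" and f :: "real \<Rightarrow> real"
  assumes f_meas[measurable]: "f \<in> borel_measurable borel"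
    and Dm: "\<And>S T. S \<in> sets borel \<Longrightarrow> T \<in> sets borel \<Longrightarrow> S \<subseteq> T \<Longrightarrow> D T \<Longrightarrow> D S"
    and Du: "\<And>S T. S \<in> sets borel \<Longrightarrow> T \<in> sets borel \<Longrightarrow> D S \<Longrightarrow> D T \<Longrightarrow> D (S \<union> T)"
    and Dc: "\<And>S T. S \<in> sets borel \<Longrightarrow> T \<in> sets borel \<Longrightarrow> D S \<Longrightarrow> D T \<Longrightarrow> S \<union> T = UNIV \<Longrightarrow> False"
begin

definition AL :: "real \<Rightarrow> bool" where "AL a \<longleftrightarrow> (\<forall>e>0. D {s. e < \<bar>f s - a\<bar>})"
definition U :: "real \<Rightarrow> bool" where "U q \<longleftrightarrow> D {s. q < f s}"
definition L :: "real \<Rightarrow> bool" where "L q \<longleftrightarrow> D {s. f s < q}"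

lemma sets1a: "{s. q < f s} \<in> sets borel" by measurable
lemma sets1b: "{s. f s < q} \<in> sets borel" by measurable
lemma sets1c: "{s. e < \<bar>f s - a\<bar>} \<in> sets borel" by measurable
lemmas sets1 = sets1a sets1b sets1c

lemma U_mono: "U q \<Longrightarrow> q \<le> q' \<Longrightarrow> U q'"
  unfolding U_def by (erule Dm[OF sets1(1) sets1(1), rotated]) auto

lemma L_mono: "L q \<Longrightarrow> q' \<le> q \<Longrightarrow> L q'"
  unfolding L_def by (erule Dm[OF sets1(2) sets1(2), rotated]) auto

lemma UL_incompat: "U q \<Longrightarrow> L q' \<Longrightarrow> q < q' \<Longrightarrow> False"
  unfolding U_def L_def by (erule Dc[OF sets1(1) sets1(2), rotated]) auto

lemma AL_char: "AL a \<longleftrightarrow> (\<forall>q::rat. a < of_rat q \<longrightarrow> U (of_rat q)) \<and> (\<forall>q::rat. of_rat q < a \<longrightarrow> L (of_rat q))"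
proof
  assume A: "AL a"
  show "(\<forall>q::rat. a < of_rat q \<longrightarrow> U (of_rat q)) \<and> (\<forall>q::rat. of_rat q < a \<longrightarrow> L (of_rat q))"
  proof (intro conjI allI impI)
    fix q :: rat assume q: "a < of_rat q"
    have "D {s. of_rat q - a < \<bar>f s - a\<bar>}" using A q unfolding AL_def by simp
    then show "U (of_rat q)" unfolding U_def by (rule Dm[OF sets1(1) sets1(3), rotated]) auto
  next
    fix q :: rat assume q: "of_rat q < a"
    have "D {s. a - of_rat q < \<bar>f s - a\<bar>}" using A q unfolding AL_def by simp
    then show "L (of_rat q)" unfolding L_def by (rule Dm[OF sets1(2) sets1(3), rotated]) auto
  qed
next
  assume B: "(\<forall>q::rat. a < of_rat q \<longrightarrow> U (of_rat q)) \<and> (\<forall>q::rat. of_rat q < a \<longrightarrow> L (of_rat q))"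
  show "AL a" unfolding AL_def
  proof (intro allI impI)
    fix e :: real assume e: "e > 0"
    obtain q1 :: rat where q1: "a < of_rat q1" "of_rat q1 < a + e" using of_rat_dense[of a "a+e"] e by auto
    obtain q2 :: rat where q2: "a - e < of_rat q2" "of_rat q2 < a" using of_rat_dense[of "a-e" a] e by auto
    have "D ({s. of_rat q1 < f s} \<union> {s. f s < of_rat q2})"
      using B q1 q2 unfolding U_def L_def by (intro Du sets1) auto
    then show "D {s. e < \<bar>f s - a\<bar>}" by (rule Dm[OF sets1(3) sets.Un[OF sets1(1) sets1(2)], rotated]) (use q1 q2 in auto)
  qed
qed

lemma AL_UD: "AL a \<Longrightarrow> a < of_rat q \<Longrightarrow> U (of_rat q)"
  using AL_char by blast
lemma AL_LD: "AL a \<Longrightarrow> of_rat q < a \<Longrightarrow> L (of_rat q)"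
  using AL_char by blast

lemma AL_U: "AL a \<Longrightarrow> U q \<Longrightarrow> a \<le> q"
proof (rule ccontr)
  assume A: "AL a" "U q" "\<not> a \<le> q"
  obtain r :: rat where r: "q < of_rat r" "of_rat r < a" using of_rat_dense[of q a] A by auto
  then have "L (of_rat r)" using A AL_LD by blast
  then show False using UL_incompat A r by blast
qed

lemma AL_L: "AL a \<Longrightarrow> L q \<Longrightarrow> q \<le> a"
proof (rule ccontr)
  assume A: "AL a" "L q" "\<not> q \<le> a"
  obtain r :: rat where r: "a < of_rat r" "of_rat r < q" using of_rat_dense[of a q] A by auto
  then have "U (of_rat r)" using A AL_UD by blast
  then show False using UL_incompat A r by blast
qed

lemma ex_AL: "(\<exists>a. AL a) \<longleftrightarrow> (\<exists>q::rat. U (of_rat q)) \<and> (\<exists>q::rat. L (of_rat q)) \<and>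
   (\<forall>q1 q2::rat. q1 < q2 \<longrightarrow> L (of_rat q1) \<or> U (of_rat q2))"
proof
  assume "\<exists>a. AL a"
  then obtain a where A: "AL a" by blast
  show "(\<exists>q::rat. U (of_rat q)) \<and> (\<exists>q::rat. L (of_rat q)) \<and>
   (\<forall>q1 q2::rat. q1 < q2 \<longrightarrow> L (of_rat q1) \<or> U (of_rat q2))"
  proof (intro conjI allI impI)
    obtain q :: rat where "a < of_rat q" using of_rat_dense[of a "a+1"] by auto
    then show "\<exists>q::rat. U (of_rat q)" using A AL_UD by blast
  next
    obtain q :: rat where "of_rat q < a" using of_rat_dense[of "a-1" a] by auto
    then show "\<exists>q::rat. L (of_rat q)" using A AL_LD by blast
  next
    fix q1 q2 :: rat assume "q1 < q2"
    then have "of_rat q1 < (of_rat q2 :: real)" by (simp add: of_rat_less)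
    then show "L (of_rat q1) \<or> U (of_rat q2)" using A AL_UD AL_LD by (cases "of_rat q1 < a") auto
  qed
next
  assume B: "(\<exists>q::rat. U (of_rat q)) \<and> (\<exists>q::rat. L (of_rat q)) \<and>
   (\<forall>q1 q2::rat. q1 < q2 \<longrightarrow> L (of_rat q1) \<or> U (of_rat q2))"
  define X where "X = {x::real. \<exists>q::rat. x = of_rat q \<and> U (of_rat q)}"
  obtain q0 :: rat where q0: "U (of_rat q0)" using B by blast
  obtain l0 :: rat where l0: "L (of_rat l0)" using B by blast
  have Xne: "X \<noteq> {}" using q0 X_def by auto
  have lb: "of_rat l0 \<le> x" if "x \<in> X" for x
  proof -
    from that obtain q where q: "x = of_rat q" "U (of_rat q)" unfolding X_def by blast
    show ?thesis
    proof (rule ccontr)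
      assume "\<not> of_rat l0 \<le> x"
      then have "of_rat q < (of_rat l0::real)" using q by simp
      then show False using UL_incompat[OF q(2) l0] by blast
    qed
  qed
  have bdd: "bdd_below X" using lb by (rule bdd_belowI)
  define a where "a = Inf X"
  have "AL a" unfolding AL_char
  proof (intro conjI allI impI)
    fix q :: rat assume q: "a < of_rat q"
    then obtain x where x: "x \<in> X" "x < of_rat q" using cInf_less_iff[OF Xne bdd] a_def by auto
    then show "U (of_rat q)" unfolding X_def using U_mono by auto
  next
    fix q :: rat assume q: "of_rat q < a"
    obtain q2 :: rat where q2: "of_rat q < (of_rat q2::real)" "of_rat q2 < a" using of_rat_dense[OF q] by auto
    have "\<not> U (of_rat q2)"
    proof
      assume "U (of_rat q2)"
      then have "of_rat q2 \<in> X" unfolding X_def by auto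
      then have "a \<le> of_rat q2" unfolding a_def by (rule cInf_lower[OF _ bdd])
      then show False using q2 by simp
    qed
    moreover have "q < q2" using q2 by (simp add: of_rat_less)
    ultimately show "L (of_rat q)" using B by blast
  qed
  then show "\<exists>a. AL a" by blast
qed

end

lemma jump_char:
  assumes R: "dfam D1 f" and Lf: "dfam D2 f"
  shows "(\<exists>a b. dfam.AL D1 f a \<and> dfam.AL D2 f b \<and> a \<noteq> b) \<longleftrightarrow>
    (\<exists>a. dfam.AL D1 f a) \<and> (\<exists>b. dfam.AL D2 f b) \<and>
    (\<exists>q1 q2::rat. q1 < q2 \<and> ((dfam.U D1 f (of_rat q1) \<and> dfam.L D2 f (of_rat q2)) \<or>
                                (dfam.L D1 f (of_rat q2) \<and> dfam.U D2 f (of_rat q1))))"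
proof
  interpret r: dfam D1 f by fact
  interpret l: dfam D2 f by fact
  assume "\<exists>a b. r.AL a \<and> l.AL b \<and> a \<noteq> b"
  then obtain a b where ab: "r.AL a" "l.AL b" "a \<noteq> b" by blast
  show "(\<exists>a. r.AL a) \<and> (\<exists>b. l.AL b) \<and>
    (\<exists>q1 q2::rat. q1 < q2 \<and> ((r.U (of_rat q1) \<and> l.L (of_rat q2)) \<or> (r.L (of_rat q2) \<and> l.U (of_rat q1))))"
  proof (intro conjI)
    show "\<exists>a. r.AL a" "\<exists>b. l.AL b" using ab by blast+
    show "\<exists>q1 q2::rat. q1 < q2 \<and> ((r.U (of_rat q1) \<and> l.L (of_rat q2)) \<or> (r.L (of_rat q2) \<and> l.U (of_rat q1)))"
    proof (cases "a < b")
      case True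
      obtain q1 :: rat where q1: "a < of_rat q1" "of_rat q1 < (a+b)/2" using of_rat_dense[of a "(a+b)/2"] True by auto
      obtain q2 :: rat where q2: "(a+b)/2 < of_rat q2" "of_rat q2 < b" using of_rat_dense[of "(a+b)/2" b] True by auto
      have "q1 < q2" using q1 q2 by (simp add: of_rat_less[symmetric, where 'a=real])
      moreover have "r.U (of_rat q1)" using ab q1 r.AL_UD by blast
      moreover have "l.L (of_rat q2)" using ab q2 l.AL_LD by blast
      ultimately show ?thesis by blast
    next
      case False
      then have ba: "b < a" using ab by simp
      obtain q1 :: rat where q1: "b < of_rat q1" "of_rat q1 < (a+b)/2" using of_rat_dense[of b "(a+b)/2"] ba by auto
      obtain q2 :: rat where q2: "(a+b)/2 < of_rat q2" "of_rat q2 < a" using of_rat_dense[of "(a+b)/2" a] ba by auto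
      have "q1 < q2" using q1 q2 by (simp add: of_rat_less[symmetric, where 'a=real])
      moreover have "l.U (of_rat q1)" using ab q1 l.AL_UD by blast
      moreover have "r.L (of_rat q2)" using ab q2 r.AL_LD by blast
      ultimately show ?thesis by blast
    qed
  qed
next
  interpret r: dfam D1 f by fact
  interpret l: dfam D2 f by fact
  assume H: "(\<exists>a. r.AL a) \<and> (\<exists>b. l.AL b) \<and>
    (\<exists>q1 q2::rat. q1 < q2 \<and> ((r.U (of_rat q1) \<and> l.L (of_rat q2)) \<or> (r.L (of_rat q2) \<and> l.U (of_rat q1))))"
  then obtain a b q1 q2 where ab: "r.AL a" "l.AL b" and q: "q1 < q2"
    and c: "(r.U (of_rat q1) \<and> l.L (of_rat q2)) \<or> (r.L (of_rat q2) \<and> l.U (of_rat q1))" by blast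
  have qq: "(of_rat q1::real) < of_rat q2" using q by (simp add: of_rat_less)
  from c have "a \<noteq> b"
  proof
    assume "r.U (of_rat q1) \<and> l.L (of_rat q2)"
    then have "a \<le> of_rat q1" "of_rat q2 \<le> b" using r.AL_U l.AL_L ab by auto
    then show "a \<noteq> b" using qq by auto
  next
    assume "r.L (of_rat q2) \<and> l.U (of_rat q1)"
    then have "of_rat q2 \<le> a" "b \<le> of_rat q1" using r.AL_L l.AL_U ab by auto
    then show "a \<noteq> b" using qq by auto
  qed
  then show "\<exists>a b. r.AL a \<and> l.AL b \<and> a \<noteq> b" using ab by blast
qed

lemma dzs_dfam:
  assumes I: "goodI I" and f: "f \<in> borel_measurable borel" shows "dfam (dzs I) f"
proof (rule dfam.intro[OF f])
  fix S T :: "real set"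
  show "S \<in> sets borel \<Longrightarrow> T \<in> sets borel \<Longrightarrow> S \<subseteq> T \<Longrightarrow> dzs I T \<Longrightarrow> dzs I S"
    using dzs_mono[OF I, of T S] by blast
  show "S \<in> sets borel \<Longrightarrow> T \<in> sets borel \<Longrightarrow> dzs I S \<Longrightarrow> dzs I T \<Longrightarrow> dzs I (S \<union> T)"
    using dzs_Un[OF I, of T S] by blast
  show "S \<in> sets borel \<Longrightarrow> T \<in> sets borel \<Longrightarrow> dzs I S \<Longrightarrow> dzs I T \<Longrightarrow> S \<union> T = UNIV \<Longrightarrow> False"
    using dzs_cover[OF I, of T S] by blast
qed

definition IR :: "real \<Rightarrow> real \<Rightarrow> real set" where "IR t r = {t<..<t+r}"
definition IL :: "real \<Rightarrow> real \<Rightarrow> real set" where "IL t r = {t-r<..<t}"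

lemma goodI_IR: "goodI (IR t)"
  unfolding goodI_def IR_def by (auto simp: emeasure_lborel_Ioo)

lemma goodI_IL: "goodI (IL t)"
  unfolding goodI_def IL_def by (auto simp: emeasure_lborel_Ioo)

lemma aplim_right_AL:
  assumes f[measurable]: "f \<in> borel_measurable borel"
  shows "aplim_right f t a \<longleftrightarrow> dfam.AL (dzs (IR t)) f a"
proof -
  have "measure lebesgue {s. t < s \<and> s < t + r \<and> e < \<bar>f s - a\<bar>} = measure lborel (IR t r \<inter> {s. e < \<bar>f s - a\<bar>})"
    for r e
  proof -
    have eq: "{s. t < s \<and> s < t + r \<and> e < \<bar>f s - a\<bar>} = IR t r \<inter> {s. e < \<bar>f s - a\<bar>}"
      unfolding IR_def by auto
    have "IR t r \<inter> {s. e < \<bar>f s - a\<bar>} \<in> sets lborel" unfolding IR_def by measurable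
    then show ?thesis unfolding eq by (rule measure_completion)
  qed
  then show ?thesis
    unfolding aplim_right_def dfam.AL_def[OF dzs_dfam[OF goodI_IR f]] dzs_def by simp
qed

lemma aplim_left_AL:
  assumes f[measurable]: "f \<in> borel_measurable borel"
  shows "aplim_left f t a \<longleftrightarrow> dfam.AL (dzs (IL t)) f a"
proof -
  have "measure lebesgue {s. t - r < s \<and> s < t \<and> e < \<bar>f s - a\<bar>} = measure lborel (IL t r \<inter> {s. e < \<bar>f s - a\<bar>})"
    for r e
  proof -
    have eq: "{s. t - r < s \<and> s < t \<and> e < \<bar>f s - a\<bar>} = IL t r \<inter> {s. e < \<bar>f s - a\<bar>}"
      unfolding IL_def by auto
    have "IL t r \<inter> {s. e < \<bar>f s - a\<bar>} \<in> sets lborel" unfolding IL_def by measurable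
    then show ?thesis unfolding eq by (rule measure_completion)
  qed
  then show ?thesis
    unfolding aplim_left_def dfam.AL_def[OF dzs_dfam[OF goodI_IL f]] dzs_def by simp
qed

lemma jumpset_char:
  fixes t :: real and f :: "real \<Rightarrow> real"
  assumes f[measurable]: "f \<in> borel_measurable borel"
  defines "UR \<equiv> \<lambda>q. dzs (IR t) {s. q < f s}" and "LR \<equiv> \<lambda>q. dzs (IR t) {s. f s < q}"
    and "UL \<equiv> \<lambda>q. dzs (IL t) {s. q < f s}" and "LL \<equiv> \<lambda>q. dzs (IL t) {s. f s < q}"
  shows "t \<in> jumpset f \<longleftrightarrow>
    ((\<exists>q::rat. UR (of_rat q)) \<and> (\<exists>q::rat. LR (of_rat q)) \<and> (\<forall>q1 q2::rat. q1 < q2 \<longrightarrow> LR (of_rat q1) \<or> UR (of_rat q2))) \<and>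
    ((\<exists>q::rat. UL (of_rat q)) \<and> (\<exists>q::rat. LL (of_rat q)) \<and> (\<forall>q1 q2::rat. q1 < q2 \<longrightarrow> LL (of_rat q1) \<or> UL (of_rat q2))) \<and>
    (\<exists>q1 q2::rat. q1 < q2 \<and> ((UR (of_rat q1) \<and> LL (of_rat q2)) \<or> (LR (of_rat q2) \<and> UL (of_rat q1))))"
proof -
  have R: "dfam (dzs (IR t)) f" by (rule dzs_dfam[OF goodI_IR f])
  have L: "dfam (dzs (IL t)) f" by (rule dzs_dfam[OF goodI_IL f])
  have UR: "UR = dfam.U (dzs (IR t)) f" and LR: "LR = dfam.L (dzs (IR t)) f"
    and UL: "UL = dfam.U (dzs (IL t)) f" and LL: "LL = dfam.L (dzs (IL t)) f"
    unfolding UR_def LR_def UL_def LL_def dfam.U_def[OF R] dfam.L_def[OF R] dfam.U_def[OF L] dfam.L_def[OF L]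
    by (auto simp: fun_eq_iff)
  have "t \<in> jumpset f \<longleftrightarrow> (\<exists>a b. dfam.AL (dzs (IR t)) f a \<and> dfam.AL (dzs (IL t)) f b \<and> a \<noteq> b)"
    unfolding jumpset_def aplim_right_AL[OF f] aplim_left_AL[OF f] by simp
  also have "\<dots> \<longleftrightarrow> (\<exists>a. dfam.AL (dzs (IR t)) f a) \<and> (\<exists>b. dfam.AL (dzs (IL t)) f b) \<and>
    (\<exists>q1 q2::rat. q1 < q2 \<and> ((dfam.U (dzs (IR t)) f (of_rat q1) \<and> dfam.L (dzs (IL t)) f (of_rat q2)) \<or>
                                (dfam.L (dzs (IR t)) f (of_rat q2) \<and> dfam.U (dzs (IL t)) f (of_rat q1))))"
    by (rule jump_char[OF R L])
  finally show ?thesis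
    unfolding dfam.ex_AL[OF R] dfam.ex_AL[OF L] UR LR UL LL .
qed

lemma dzs_seq:
  assumes I: "goodI I" and S: "\<And>r. r > 0 \<Longrightarrow> I r \<inter> S \<in> sets borel"
  shows "dzs I S \<longleftrightarrow> (\<lambda>k. measure lborel (I (inverse (real (Suc k))) \<inter> S) * real (Suc k)) \<longlonglongrightarrow> 0"
proof -
  define m where "m r = measure lborel (I r \<inter> S)" for r
  have mono: "m r \<le> m r'" if "0 < r" "r \<le> r'" for r r'
  proof -
    have "I r \<subseteq> I r'" using I that unfolding goodI_def by blast
    moreover have "I r' \<inter> S \<in> fmeasurable lborel" using goodI_fm[OF I _ S] that by simp
    ultimately show ?thesis unfolding m_def
      by (intro measure_mono_fmeasurable) (use S that in auto)
  qed
  have nn: "0 \<le> m r" for r unfolding m_def by simp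
  show ?thesis unfolding m_def[symmetric] dzs_def
  proof
    assume d: "((\<lambda>r. m r / r) \<longlongrightarrow> 0) (at_right 0)"
    have lim: "filterlim (\<lambda>k. inverse (real (Suc k))) (at_right 0) sequentially"
      by (rule tendsto_imp_filterlim_at_right[OF LIMSEQ_inverse_real_of_nat]) simp
    have "(\<lambda>k. m (inverse (real (Suc k))) / inverse (real (Suc k))) \<longlonglongrightarrow> 0"
      using filterlim_compose[OF d lim] by (simp add: o_def)
    then show "(\<lambda>k. m (inverse (real (Suc k))) * real (Suc k)) \<longlonglongrightarrow> 0"
      by (simp add: divide_inverse)
  next
    assume s: "(\<lambda>k. m (inverse (real (Suc k))) * real (Suc k)) \<longlonglongrightarrow> 0"
    show "((\<lambda>r. m r / r) \<longlongrightarrow> 0) (at_right 0)"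
      unfolding tendsto_iff
    proof (intro allI impI)
      fix e :: real assume e: "e > 0"
      have "\<exists>no. \<forall>k\<ge>no. norm (m (inverse (real (Suc k))) * real (Suc k) - 0) < e / 2"
        using s[unfolded LIMSEQ_iff, rule_format, of "e/2"] e by simp
      then obtain K where K: "\<And>k. k \<ge> K \<Longrightarrow> \<bar>m (inverse (real (Suc k))) * real (Suc k)\<bar> < e / 2"
        by auto
      show "\<forall>\<^sub>F r in at_right 0. dist (m r / r) 0 < e"
        unfolding eventually_at_right_field
      proof (intro exI[of _ "inverse (real (Suc K))"] conjI allI impI)
        show "0 < inverse (real (Suc K))" by simp
        fix r :: real assume r0: "0 < r" and rK: "r < inverse (real (Suc K))"
        define n where "n = nat \<lfloor>1 / r\<rfloor>"
        have "r * real (Suc K) < 1" using rK by (simp add: field_simps)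
        then have SK: "real (Suc K) < 1 / r" using r0 by (simp add: field_simps)
        have fl0: "0 \<le> \<lfloor>1 / r\<rfloor>" using r0 by simp
        have nr: "real n = real_of_int \<lfloor>1 / r\<rfloor>" unfolding n_def using fl0 by simp
        have "int (Suc K) \<le> \<lfloor>1 / r\<rfloor>" using SK by (simp add: le_floor_iff)
        then have nK: "Suc K \<le> n" unfolding n_def by simp
        have n1: "real n \<le> 1 / r" "1 / r < real n + 1" unfolding nr by linarith+
        obtain k where k: "n = Suc k" using nK by (cases n) auto
        have kK: "k \<ge> K" using nK k by simp
        have rn: "r \<le> inverse (real (Suc k))"
          using n1(1) r0 k nK by (simp add: field_simps)
        have "m r \<le> m (inverse (real (Suc k)))" by (rule mono[OF r0 rn])
        moreover have "1 / r \<le> 2 * real (Suc k)" using n1 k by simp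
        moreover have "m (inverse (real (Suc k))) * real (Suc k) < e / 2" using K[OF kK] by simp
        ultimately have "m r * (1 / r) < e"
        proof -
          assume a: "m r \<le> m (inverse (real (Suc k)))" "1 / r \<le> 2 * real (Suc k)"
            "m (inverse (real (Suc k))) * real (Suc k) < e / 2"
          have "m r * (1 / r) \<le> m (inverse (real (Suc k))) * (2 * real (Suc k))"
            by (rule mult_mono[OF a(1) a(2)]) (use nn r0 in auto)
          moreover have "m (inverse (real (Suc k))) * (2 * real (Suc k)) = 2 * (m (inverse (real (Suc k))) * real (Suc k))"
            by simp
          ultimately show ?thesis using a(3) by linarith
        qed
        then show "dist (m r / r) 0 < e" using nn[of r] r0 by simp
      qed
    qed
  qed
qed

lemma sets_LIMSEQ_zero:
  fixes g :: "nat \<Rightarrow> 'a \<Rightarrow> real"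
  assumes gm[measurable]: "\<And>k. g k \<in> borel_measurable M"
  shows "{x \<in> space M. (\<lambda>k. g k x) \<longlonglongrightarrow> 0} \<in> sets M"
proof -
  have eq: "(\<lambda>k. g k x) \<longlonglongrightarrow> 0 \<longleftrightarrow> (\<forall>n::nat. \<exists>K::nat. \<forall>k::nat. K \<le> k \<longrightarrow> \<bar>g k x\<bar> < inverse (real (Suc n)))" for x
    unfolding LIMSEQ_iff
  proof (intro iffI allI impI)
    fix n :: nat assume "\<forall>r>0. \<exists>no. \<forall>k\<ge>no. norm (g k x - 0) < r"
    then show "\<exists>K. \<forall>k. K \<le> k \<longrightarrow> \<bar>g k x\<bar> < inverse (real (Suc n))" by simp
  next
    fix r :: real assume H: "\<forall>n. \<exists>K. \<forall>k. K \<le> k \<longrightarrow> \<bar>g k x\<bar> < inverse (real (Suc n))" and r: "0 < r"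
    obtain n where n: "inverse (real (Suc n)) < r" using r reals_Archimedean by blast
    then show "\<exists>no. \<forall>k\<ge>no. norm (g k x - 0) < r" using H[rule_format, of n] by force
  qed
  have "Measurable.pred M (\<lambda>x. \<forall>n::nat. \<exists>K::nat. \<forall>k::nat. K \<le> k \<longrightarrow> \<bar>g k x\<bar> < inverse (real (Suc n)))"
    by measurable
  then show ?thesis unfolding eq pred_def .
qed

lemma dzs_meas:
  fixes M :: "'a measure" and \<tau> :: "'a \<Rightarrow> real" and P :: "'a \<Rightarrow> real \<Rightarrow> bool"
  assumes I: "\<And>t. goodI (I t)"
    and secs: "\<And>x r. x \<in> space M \<Longrightarrow> r > 0 \<Longrightarrow> I (\<tau> x) r \<inter> {s. P x s} \<in> sets borel"
    and Q: "\<And>r. r > 0 \<Longrightarrow> {p \<in> space (M \<Otimes>\<^sub>M lborel). snd p \<in> I (\<tau> (fst p)) r \<and> P (fst p) (snd p)} \<in> sets (M \<Otimes>\<^sub>M lborel)"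
  shows "{x \<in> space M. dzs (I (\<tau> x)) {s. P x s}} \<in> sets M"
proof -
  define g where "g k x = measure lborel (I (\<tau> x) (inverse (real (Suc k))) \<inter> {s. P x s}) * real (Suc k)" for k x
  have gm: "g k \<in> borel_measurable M" for k
  proof -
    let ?Q = "{p \<in> space (M \<Otimes>\<^sub>M lborel). snd p \<in> I (\<tau> (fst p)) (inverse (real (Suc k))) \<and> P (fst p) (snd p)}"
    have "(\<lambda>x. emeasure lborel (Pair x -` ?Q)) \<in> borel_measurable M"
      by (rule lborel.measurable_emeasure_Pair[OF Q]) simp
    then have m1: "(\<lambda>x. enn2real (emeasure lborel (Pair x -` ?Q)) * real (Suc k)) \<in> borel_measurable M"
      by measurable
    have "x \<in> space M \<Longrightarrow> Pair x -` ?Q = I (\<tau> x) (inverse (real (Suc k))) \<inter> {s. P x s}" for x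
      by (auto simp: space_pair_measure)
    then have eq: "x \<in> space M \<Longrightarrow> enn2real (emeasure lborel (Pair x -` ?Q)) * real (Suc k) = g k x" for x
      unfolding g_def measure_def by simp
    show ?thesis by (rule measurable_cong[THEN iffD1, OF _ m1]) (rule eq)
  qed
  have "{x \<in> space M. dzs (I (\<tau> x)) {s. P x s}} = {x \<in> space M. (\<lambda>k. g k x) \<longlonglongrightarrow> 0}"
    unfolding g_def using dzs_seq[OF I secs] by auto
  also have "\<dots> \<in> sets M" by (rule sets_LIMSEQ_zero[OF gm])
  finally show ?thesis .
qed

lemma jump_meas:
  fixes f :: "'a \<Rightarrow> real \<Rightarrow> real" and \<tau> :: "'a \<Rightarrow> real"
  assumes f[measurable]: "(\<lambda>p. f (fst p) (snd p)) \<in> borel_measurable (M \<Otimes>\<^sub>M lborel)"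
    and \<tau>[measurable]: "\<tau> \<in> borel_measurable M"
  shows "{x \<in> space M. \<tau> x \<in> jumpset (f x)} \<in> sets M"
proof -
  have fx: "f x \<in> borel_measurable borel" if "x \<in> space M" for x
    using measurable_compose[OF measurable_Pair1'[OF that] f] by simp
  have secR: "IR (\<tau> x) r \<inter> {s. P (f x s)} \<in> sets borel"
    if "x \<in> space M" "Measurable.pred borel P" for x r P
    using fx[OF that(1)] that(2) unfolding IR_def by measurable
  have secL: "IL (\<tau> x) r \<inter> {s. P (f x s)} \<in> sets borel"
    if "x \<in> space M" "Measurable.pred borel P" for x r P
    using fx[OF that(1)] that(2) unfolding IL_def by measurable
  have QR: "{p \<in> space (M \<Otimes>\<^sub>M lborel). snd p \<in> IR (\<tau> (fst p)) r \<and> P (f (fst p) (snd p))} \<in> sets (M \<Otimes>\<^sub>M lborel)"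
    if "Measurable.pred borel P" for r P
  proof -
    have [measurable]: "Measurable.pred (M \<Otimes>\<^sub>M lborel) (\<lambda>p. P (f (fst p) (snd p)))"
      using measurable_compose[OF f that] .
    show ?thesis unfolding IR_def greaterThanLessThan_iff by measurable
  qed
  have QL: "{p \<in> space (M \<Otimes>\<^sub>M lborel). snd p \<in> IL (\<tau> (fst p)) r \<and> P (f (fst p) (snd p))} \<in> sets (M \<Otimes>\<^sub>M lborel)"
    if "Measurable.pred borel P" for r P
  proof -
    have [measurable]: "Measurable.pred (M \<Otimes>\<^sub>M lborel) (\<lambda>p. P (f (fst p) (snd p)))"
      using measurable_compose[OF f that] .
    show ?thesis unfolding IL_def greaterThanLessThan_iff by measurable
  qed
  have pU: "Measurable.pred borel (\<lambda>y::real. c < y)" for c by measurable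
  have pL: "Measurable.pred borel (\<lambda>y::real. y < c)" for c by measurable
  have m1[measurable]: "Measurable.pred M (\<lambda>x. dzs (IR (\<tau> x)) {s. c < f x s})" for c
    unfolding pred_def by (rule dzs_meas[where P="\<lambda>x s. c < f x s", OF goodI_IR secR[OF _ pU] QR[OF pU]])
  have m2[measurable]: "Measurable.pred M (\<lambda>x. dzs (IR (\<tau> x)) {s. f x s < c})" for c
    unfolding pred_def by (rule dzs_meas[where P="\<lambda>x s. f x s < c", OF goodI_IR secR[OF _ pL] QR[OF pL]])
  have m3[measurable]: "Measurable.pred M (\<lambda>x. dzs (IL (\<tau> x)) {s. c < f x s})" for c
    unfolding pred_def by (rule dzs_meas[where P="\<lambda>x s. c < f x s", OF goodI_IL secL[OF _ pU] QL[OF pU]])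
  have m4[measurable]: "Measurable.pred M (\<lambda>x. dzs (IL (\<tau> x)) {s. f x s < c})" for c
    unfolding pred_def by (rule dzs_meas[where P="\<lambda>x s. f x s < c", OF goodI_IL secL[OF _ pL] QL[OF pL]])
  let ?UR = "\<lambda>x q. dzs (IR (\<tau> x)) {s. q < f x s}" and ?LR = "\<lambda>x q. dzs (IR (\<tau> x)) {s. f x s < q}"
  let ?UL = "\<lambda>x q. dzs (IL (\<tau> x)) {s. q < f x s}" and ?LL = "\<lambda>x q. dzs (IL (\<tau> x)) {s. f x s < q}"
  have "{x \<in> space M. \<tau> x \<in> jumpset (f x)} = {x \<in> space M.
    ((\<exists>q::rat. ?UR x (of_rat q)) \<and> (\<exists>q::rat. ?LR x (of_rat q)) \<and> (\<forall>q1 q2::rat. q1 < q2 \<longrightarrow> ?LR x (of_rat q1) \<or> ?UR x (of_rat q2))) \<and>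
    ((\<exists>q::rat. ?UL x (of_rat q)) \<and> (\<exists>q::rat. ?LL x (of_rat q)) \<and> (\<forall>q1 q2::rat. q1 < q2 \<longrightarrow> ?LL x (of_rat q1) \<or> ?UL x (of_rat q2))) \<and>
    (\<exists>q1 q2::rat. q1 < q2 \<and> ((?UR x (of_rat q1) \<and> ?LL x (of_rat q2)) \<or> (?LR x (of_rat q2) \<and> ?UL x (of_rat q1))))}"
    by (rule Collect_cong, rule conj_cong[OF refl], rule jumpset_char[OF fx])
  also have "\<dots> \<in> sets M" by measurable
  finally show ?thesis .
qed

locale setting =
  fixes \<Omega> :: "(real^'n::finite) set"
    and u :: "real^'n \<Rightarrow> real^'m::finite"
    and g :: "real^'n \<Rightarrow> real^'n \<Rightarrow> real^'m"
    and P :: "real^'n \<Rightarrow> real^'n \<Rightarrow> real^'n"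
    and \<rho> \<tau> :: real
    and A :: "((real^'n) \<times> (real^'n)) set"
    and phi :: "(real^'n) \<times> (real^'n) \<Rightarrow> real^'n"
  assumes \<Omega>_open: "open \<Omega>"
    and u_b: "u \<in> borel_measurable (restrict_space borel \<Omega>)"
    and g_c: "continuous_on (\<Omega> \<times> UNIV) (\<lambda>(x, v). g x v)"
    and A_sub: "A \<subseteq> UNIV \<times> sphere 0 1"
    and A_open: "openin (top_of_set (UNIV \<times> sphere 0 1)) A"
    and A_slice: "\<And>\<xi>. \<xi> \<in> sphere 0 1 \<Longrightarrow> {z. (z, \<xi>) \<in> A} = Acyl \<rho> \<tau> \<xi>"
    and smooth: "smooth_mfd A phi"
    and cover: "\<And>\<xi>. \<xi> \<in> sphere 0 1 \<Longrightarrow> \<Omega> \<subseteq> (\<lambda>z. phi (z, \<xi>)) ` Acyl \<rho> \<tau> \<xi>"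
    and inj: "\<And>\<xi>. \<xi> \<in> sphere 0 1 \<Longrightarrow> inj_on (\<lambda>z. phi (z, \<xi>)) {z \<in> Acyl \<rho> \<tau> \<xi>. phi (z, \<xi>) \<in> \<Omega>}"
    and Pprop: "\<And>\<xi> y t. \<xi> \<in> sphere 0 1 \<Longrightarrow> y \<in> perp \<xi> \<Longrightarrow> norm y < \<rho> \<Longrightarrow> \<bar>t\<bar> < \<tau> \<Longrightarrow>
        phi (y + t *\<^sub>R \<xi>, \<xi>) \<in> \<Omega> \<Longrightarrow> P \<xi> (phi (y + t *\<^sub>R \<xi>, \<xi>)) = y"
begin

abbreviation "S \<equiv> sphere (0::real^'n) 1"

definition Oo where "Oo = (SOME T. open T \<and> A = (UNIV \<times> S) \<inter> T)"

lemma O_props: "open Oo" "A = (UNIV \<times> S) \<inter> Oo"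
proof -
  have "\<exists>T. open T \<and> A = (UNIV \<times> S) \<inter> T" using A_open by (simp add: openin_open)
  then have "open Oo \<and> A = (UNIV \<times> S) \<inter> Oo" unfolding Oo_def by (rule someI_ex)
  then show "open Oo" "A = (UNIV \<times> S) \<inter> Oo" by auto
qed

lemma A_borel[measurable]: "A \<in> sets borel"
proof -
  have "closed (UNIV \<times> S)" by (intro closed_Times) auto
  then show ?thesis using O_props by (metis borel_closed borel_open sets.Int)
qed

lemma Acyl_open: "\<xi> \<in> S \<Longrightarrow> open (Acyl \<rho> \<tau> \<xi>)"
proof -
  assume \<xi>: "\<xi> \<in> S"
  have "Acyl \<rho> \<tau> \<xi> = (\<lambda>z. (z, \<xi>)) -` Oo" using A_slice[OF \<xi>] O_props \<xi> by auto
  moreover have "open ((\<lambda>z. (z, \<xi>)) -` Oo)"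
    by (rule continuous_open_vimage[OF O_props(1)]) (intro continuous_intros)
  ultimately show ?thesis by simp
qed

lemma local_ext:
  assumes "p \<in> A"
  obtains U h where "open U" "p \<in> U" "\<And>q. q \<in> U \<Longrightarrow> h differentiable at q" "\<And>q. q \<in> U \<inter> A \<Longrightarrow> h q = phi q"
proof -
  obtain U h where U: "open U" "p \<in> U" "Cinf_on U h" "\<forall>q\<in>U \<inter> A. h q = phi q"
    using smooth assms unfolding smooth_mfd_def by blast
  have "Ck_on 1 U h" using U(3) unfolding Cinf_on_def by blast
  then have "dderivs h U [] differentiable_on U" unfolding Ck_on_def by fastforce
  then have "h differentiable_on U" by simp
  then have "\<And>q. q \<in> U \<Longrightarrow> h differentiable at q" using differentiable_on_eq_differentiable_at[OF U(1)] by blast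
  then show ?thesis using that U by blast
qed

lemma phi_cont: "continuous_on A phi"
proof (rule continuous_on_eq_continuous_within[THEN iffD2], intro ballI)
  fix p assume p: "p \<in> A"
  obtain U h where U: "open U" "p \<in> U" "\<And>q. q \<in> U \<Longrightarrow> h differentiable at q" "\<And>q. q \<in> U \<inter> A \<Longrightarrow> h q = phi q"
    using local_ext[OF p] by blast
  obtain e where e: "e > 0" "ball p e \<subseteq> U" using U(1,2) open_contains_ball by blast
  have "continuous (at p within A) h"
    using differentiable_imp_continuous_within[OF U(3)[OF U(2)]] continuous_at_imp_continuous_within by blast
  then show "continuous (at p within A) phi"
    by (rule continuous_transform_within[OF _ e(1) p]) (use e U in \<open>auto simp: dist_commute\<close>)
qed

definition pinv :: "real^'n \<Rightarrow> real^'n \<Rightarrow> real^'n" where "pinv \<xi> x = phiinv \<rho> \<tau> phi \<xi> x"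

lemma pinv_in: "\<xi> \<in> S \<Longrightarrow> x \<in> \<Omega> \<Longrightarrow> pinv \<xi> x \<in> Acyl \<rho> \<tau> \<xi>"
  unfolding pinv_def phiinv_def using cover by (intro inv_into_into) blast

lemma pinv_eq: "\<xi> \<in> S \<Longrightarrow> x \<in> \<Omega> \<Longrightarrow> phi (pinv \<xi> x, \<xi>) = x"
  unfolding pinv_def phiinv_def using cover f_inv_into_f[of x "\<lambda>z. phi (z, \<xi>)" "Acyl \<rho> \<tau> \<xi>"] by blast

lemma pinv_A: "\<xi> \<in> S \<Longrightarrow> x \<in> \<Omega> \<Longrightarrow> (pinv \<xi> x, \<xi>) \<in> A"
  using pinv_in A_slice by blast

lemma pinv_unique: "\<xi> \<in> S \<Longrightarrow> z \<in> Acyl \<rho> \<tau> \<xi> \<Longrightarrow> phi (z, \<xi>) \<in> \<Omega> \<Longrightarrow> pinv \<xi> (phi (z, \<xi>)) = z"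
proof -
  assume \<xi>: "\<xi> \<in> S" and z: "z \<in> Acyl \<rho> \<tau> \<xi>" and zO: "phi (z, \<xi>) \<in> \<Omega>"
  let ?x = "phi (z, \<xi>)"
  have "phi (pinv \<xi> ?x, \<xi>) = phi (z, \<xi>)" using pinv_eq[OF \<xi> zO] .
  moreover have "pinv \<xi> ?x \<in> {z \<in> Acyl \<rho> \<tau> \<xi>. phi (z, \<xi>) \<in> \<Omega>}" using pinv_in[OF \<xi> zO] pinv_eq[OF \<xi> zO] zO by simp
  moreover have "z \<in> {z \<in> Acyl \<rho> \<tau> \<xi>. phi (z, \<xi>) \<in> \<Omega>}" using z zO by simp
  ultimately show ?thesis using inj[OF \<xi>] unfolding inj_on_def by blast
qed

lemma P_eq:
  assumes \<xi>: "\<xi> \<in> S" and x: "x \<in> \<Omega>"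
  shows "P \<xi> x = pinv \<xi> x - (pinv \<xi> x \<bullet> \<xi>) *\<^sub>R \<xi>"
proof -
  obtain y t where yt: "pinv \<xi> x = y + t *\<^sub>R \<xi>" "y \<in> perp \<xi>" "norm y < \<rho>" "\<bar>t\<bar> < \<tau>"
    using pinv_in[OF \<xi> x] unfolding Acyl_def by blast
  have "phi (y + t *\<^sub>R \<xi>, \<xi>) = x" using pinv_eq[OF \<xi> x] yt(1) by simp
  then have Py: "P \<xi> x = y" using Pprop[OF \<xi> yt(2,3,4)] x by simp
  have "\<xi> \<bullet> \<xi> = 1" using \<xi> by (simp add: dot_square_norm)
  moreover have "y \<bullet> \<xi> = 0" using yt(2) unfolding perp_def by simp
  ultimately have "pinv \<xi> x \<bullet> \<xi> = t" using yt(1) by (simp add: inner_add_left)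
  then show ?thesis using Py yt(1) by simp
qed

lemma tx_eq: "tx \<rho> \<tau> phi \<xi> x = pinv \<xi> x \<bullet> \<xi>"
  unfolding tx_def pinv_def ..

end

context setting begin

definition K :: "nat \<Rightarrow> ((real^'n) \<times> (real^'n)) set" where
  "K k = {p. norm p \<le> real k \<and> (\<forall>q. q \<notin> Oo \<longrightarrow> inverse (real (Suc k)) \<le> dist p q)} \<inter> (UNIV \<times> S)"

lemma K_compact: "compact (K k)"
proof -
  have c1: "closed {p::(real^'n) \<times> (real^'n). norm p \<le> real k}"
    by (intro closed_Collect_le continuous_intros)
  have "{p::(real^'n) \<times> (real^'n). \<forall>q. q \<notin> Oo \<longrightarrow> inverse (real (Suc k)) \<le> dist p q}
      = (\<Inter>q\<in>-Oo. {p. inverse (real (Suc k)) \<le> dist p q})" by auto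
  moreover have "closed (\<Inter>q\<in>-Oo. {p::(real^'n) \<times> (real^'n). inverse (real (Suc k)) \<le> dist p q})"
    by (intro closed_INT ballI closed_Collect_le continuous_intros)
  ultimately have c2: "closed {p::(real^'n) \<times> (real^'n). \<forall>q. q \<notin> Oo \<longrightarrow> inverse (real (Suc k)) \<le> dist p q}"
    by simp
  have c3: "closed (UNIV \<times> S)" by (intro closed_Times) auto
  have cl: "closed (K k)" unfolding K_def
    using closed_Int[OF closed_Int[OF c1 c2] c3] by (simp add: Collect_conj_eq)
  have "K k \<subseteq> cball 0 (real k)" unfolding K_def by auto
  then have "bounded (K k)" using bounded_cball bounded_subset by blast
  then show ?thesis using cl by (simp add: compact_eq_bounded_closed)
qed

lemma K_sub: "K k \<subseteq> A"
proof
  fix p assume p: "p \<in> K k"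
  have "p \<in> Oo"
  proof (rule ccontr)
    assume "p \<notin> Oo"
    then have "inverse (real (Suc k)) \<le> dist p p" using p unfolding K_def by blast
    then show False by simp
  qed
  then show "p \<in> A" using p O_props(2) unfolding K_def by blast
qed

lemma K_cover: "A \<subseteq> (\<Union>k. K k)"
proof
  fix p assume p: "p \<in> A"
  then have pO: "p \<in> Oo" and pS: "p \<in> UNIV \<times> S" using O_props(2) by blast+
  obtain e where e: "e > 0" "ball p e \<subseteq> Oo" using pO O_props(1) open_contains_ball by blast
  obtain n where n: "inverse (real (Suc n)) < e" using e(1) reals_Archimedean by blast
  define k where "k = max n (nat \<lceil>norm p\<rceil>)"
  have "norm p \<le> real k" unfolding k_def by linarith
  moreover have "inverse (real (Suc k)) \<le> dist p q" if "q \<notin> Oo" for q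
  proof -
    have "q \<notin> ball p e" using that e(2) by blast
    then have "e \<le> dist p q" by simp
    moreover have "inverse (real (Suc k)) \<le> inverse (real (Suc n))" unfolding k_def
      by (intro le_imp_inverse_le) auto
    ultimately show ?thesis using n by linarith
  qed
  ultimately have "p \<in> K k" using pS unfolding K_def by blast
  then show "p \<in> (\<Union>k. K k)" by blast
qed

definition Psi :: "(real^'n) \<times> (real^'n) \<Rightarrow> (real^'n) \<times> (real^'n)" where
  "Psi q = (phi q, snd q)"

lemma closed_pre:
  assumes C: "closed C"
  shows "{p \<in> \<Omega> \<times> S. pinv (snd p) (fst p) \<in> C} \<in> sets borel"
proof -
  have eq: "{p \<in> \<Omega> \<times> S. pinv (snd p) (fst p) \<in> C} = (\<Omega> \<times> S) \<inter> (\<Union>k. Psi ` (K k \<inter> (C \<times> UNIV)))"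
  proof (intro equalityI subsetI)
    fix p assume p: "p \<in> {p \<in> \<Omega> \<times> S. pinv (snd p) (fst p) \<in> C}"
    obtain x \<xi> where px: "p = (x, \<xi>)" "x \<in> \<Omega>" "\<xi> \<in> S" "pinv \<xi> x \<in> C" using p by auto
    have "(pinv \<xi> x, \<xi>) \<in> A" using pinv_A px by blast
    then obtain k where k: "(pinv \<xi> x, \<xi>) \<in> K k" using K_cover by blast
    have "Psi (pinv \<xi> x, \<xi>) = p" unfolding Psi_def using pinv_eq px by simp
    then show "p \<in> (\<Omega> \<times> S) \<inter> (\<Union>k. Psi ` (K k \<inter> (C \<times> UNIV)))"
    proof -
      have "(pinv \<xi> x, \<xi>) \<in> K k \<inter> (C \<times> UNIV)" using k px(4) by simp
      then have "p \<in> Psi ` (K k \<inter> (C \<times> UNIV))" using \<open>Psi (pinv \<xi> x, \<xi>) = p\<close> by (metis image_eqI)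
      then have "p \<in> (\<Union>k. Psi ` (K k \<inter> (C \<times> UNIV)))" by (rule UN_I[OF UNIV_I])
      moreover have "p \<in> \<Omega> \<times> S" using px by simp
      ultimately show ?thesis by (rule IntI[rotated])
    qed
  next
    fix p assume p: "p \<in> (\<Omega> \<times> S) \<inter> (\<Union>k. Psi ` (K k \<inter> (C \<times> UNIV)))"
    then obtain k z \<xi> where zk: "(z, \<xi>) \<in> K k" "z \<in> C" "p = Psi (z, \<xi>)" by auto
    then have p2: "p = (phi (z, \<xi>), \<xi>)" unfolding Psi_def by simp
    have xO: "phi (z, \<xi>) \<in> \<Omega>" and \<xi>: "\<xi> \<in> S" using p p2 by auto
    have "(z, \<xi>) \<in> A" using zk K_sub by blast
    then have "z \<in> Acyl \<rho> \<tau> \<xi>" using A_slice[OF \<xi>] by blast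
    then have "pinv \<xi> (phi (z, \<xi>)) = z" using pinv_unique \<xi> xO by blast
    then show "p \<in> {p \<in> \<Omega> \<times> S. pinv (snd p) (fst p) \<in> C}" using p2 xO \<xi> zk by simp
  qed
  have "compact (Psi ` (K k \<inter> (C \<times> UNIV)))" for k
  proof (rule compact_continuous_image)
    show "compact (K k \<inter> (C \<times> UNIV))"
      by (rule compact_Int_closed[OF K_compact]) (intro closed_Times C closed_UNIV)
    have "continuous_on (K k \<inter> (C \<times> UNIV)) phi"
      by (rule continuous_on_subset[OF phi_cont]) (use K_sub in blast)
    then show "continuous_on (K k \<inter> (C \<times> UNIV)) Psi"
      unfolding Psi_def by (intro continuous_intros)
  qed
  then have "Psi ` (K k \<inter> (C \<times> UNIV)) \<in> sets borel" for k
    by (simp add: borel_closed compact_imp_closed)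
  moreover have "\<Omega> \<times> S \<in> sets borel"
  proof -
    have "\<Omega> \<times> S = (\<Omega> \<times> UNIV) \<inter> (UNIV \<times> S)" by auto
    moreover have "open (\<Omega> \<times> (UNIV :: (real^'n) set))" using \<Omega>_open by (intro open_Times) auto
    moreover have "closed (UNIV \<times> S)" by (intro closed_Times) auto
    ultimately show ?thesis by (metis borel_closed borel_open sets.Int)
  qed
  ultimately show ?thesis unfolding eq by (intro sets.Int sets.countable_UN) auto
qed

definition Z :: "(real^'n) \<times> (real^'n) \<Rightarrow> real^'n" where
  "Z p = (if p \<in> \<Omega> \<times> S then pinv (snd p) (fst p) else 0)"

lemma OmS_borel[measurable]: "\<Omega> \<times> S \<in> sets borel"
  using closed_pre[of UNIV] by simp

lemma Z_meas: "Z \<in> borel_measurable borel"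
proof (rule borel_measurableI)
  fix T :: "(real^'n) set" assume T: "open T"
  have "Z -` T \<inter> space borel = ((\<Omega> \<times> S) - {p \<in> \<Omega> \<times> S. pinv (snd p) (fst p) \<in> -T}) \<union>
      (if 0 \<in> T then -(\<Omega> \<times> S) else {})"
    unfolding Z_def by (auto split: if_splits)
  moreover have "{p \<in> \<Omega> \<times> S. pinv (snd p) (fst p) \<in> -T} \<in> sets borel"
    using closed_pre[of "-T"] T by (simp add: closed_Compl)
  ultimately show "Z -` T \<inter> space borel \<in> sets borel" by simp
qed

end

lemma mfst[measurable (raw)]:
  fixes f :: "'a \<Rightarrow> ('b::{second_countable_topology, real_normed_vector}) \<times> ('c::{second_countable_topology, real_normed_vector})"
  assumes "f \<in> borel_measurable M"
  shows "(\<lambda>x. fst (f x)) \<in> borel_measurable M"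
  by (rule measurable_compose[OF assms borel_measurable_continuous_onI]) (intro continuous_intros)

lemma msnd[measurable (raw)]:
  fixes f :: "'a \<Rightarrow> ('b::{second_countable_topology, real_normed_vector}) \<times> ('c::{second_countable_topology, real_normed_vector})"
  assumes "f \<in> borel_measurable M"
  shows "(\<lambda>x. snd (f x)) \<in> borel_measurable M"
  by (rule measurable_compose[OF assms borel_measurable_continuous_onI]) (intro continuous_intros)

context setting begin

definition phit :: "(real^'n) \<times> (real^'n) \<Rightarrow> real^'n" where
  "phit p = (if p \<in> A then phi p else 0)"

lemma phit_meas[measurable]: "phit \<in> borel_measurable borel"
  unfolding phit_def by (rule borel_measurable_continuous_on_if[OF A_borel phi_cont continuous_on_const])

lemma phidot_seq:
  assumes p: "(w, \<xi>) \<in> A"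
  shows "(\<lambda>k. real (Suc k) *\<^sub>R (phi (w + inverse (real (Suc k)) *\<^sub>R \<xi>, \<xi>) - phi (w, \<xi>))) \<longlonglongrightarrow> phidot phi \<xi> w"
proof -
  have \<xi>: "\<xi> \<in> S" using p A_sub by blast
  obtain U h where U: "open U" "(w, \<xi>) \<in> U" "\<And>q. q \<in> U \<Longrightarrow> h differentiable at q" "\<And>q. q \<in> U \<inter> A \<Longrightarrow> h q = phi q"
    using local_ext[OF p] by blast
  obtain D where D: "(h has_derivative D) (at (w, \<xi>))" using U(3)[OF U(2)] unfolding differentiable_def by blast
  let ?c = "\<lambda>t::real. (w + t *\<^sub>R \<xi>, \<xi>)"
  have c: "(?c has_derivative (\<lambda>t. (t *\<^sub>R \<xi>, 0))) (at 0)"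
    by (auto intro!: derivative_eq_intros)
  have D0: "(h has_derivative D) (at (?c 0))" using D by simp
  have lin: "linear D" using D has_derivative_linear by blast
  define V where "V = D (\<xi>, 0)"
  have "((\<lambda>t. h (?c t)) has_derivative (\<lambda>t. D (t *\<^sub>R \<xi>, 0))) (at 0)"
    by (rule has_derivative_compose[OF c D0])
  moreover have "(\<lambda>t. D (t *\<^sub>R \<xi>, 0)) = (\<lambda>t. t *\<^sub>R V)"
  proof
    fix t :: real
    have e1: "(t *\<^sub>R \<xi>, 0::real^'n) = t *\<^sub>R (\<xi>, 0)" by simp
    show "D (t *\<^sub>R \<xi>, 0) = t *\<^sub>R V" unfolding V_def e1 by (rule linear_cmul[OF lin])
  qed
  ultimately have hv: "((\<lambda>t. h (?c t)) has_vector_derivative V) (at 0)"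
    unfolding has_vector_derivative_def by simp
  define T where "T = ?c -` (U \<inter> Oo)"
  have Topen: "open T" unfolding T_def
    by (rule continuous_open_vimage[OF open_Int[OF U(1) O_props(1)]]) (intro continuous_intros)
  have AO: "A \<subseteq> Oo" using O_props(2) by blast
  have T0: "0 \<in> T" unfolding T_def using U(2) p AO by (simp add: subsetD)
  have TA: "?c t \<in> U \<inter> A" if "t \<in> T" for t
  proof -
    have "?c t \<in> U" "?c t \<in> Oo" using that unfolding T_def by simp_all
    moreover have "?c t \<in> UNIV \<times> S" using \<xi> by simp
    ultimately show ?thesis using O_props(2) by blast
  qed
  have pv: "((\<lambda>t. phi (?c t)) has_vector_derivative V) (at 0)"
    by (rule has_vector_derivative_transform_within_open[OF hv Topen T0]) (rule U(4)[OF TA])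
  then have pd: "phidot phi \<xi> w = V" unfolding phidot_def by (rule vector_derivative_at)
  have "((\<lambda>t. phi (?c t)) has_derivative (\<lambda>t. t *\<^sub>R V)) (at 0)"
    using pv unfolding has_vector_derivative_def .
  then have "((\<lambda>y. norm ((phi (?c y) - phi (?c 0)) - (y - 0) *\<^sub>R V) / norm (y - 0)) \<longlongrightarrow> 0) (at 0)"
    unfolding has_derivative_iff_norm by blast
  moreover have lim: "filterlim (\<lambda>k. inverse (real (Suc k))) (at 0) sequentially"
  proof -
    have "filterlim (\<lambda>k. inverse (real (Suc k))) (at_right 0) sequentially"
      by (rule tendsto_imp_filterlim_at_right[OF LIMSEQ_inverse_real_of_nat]) simp
    then show ?thesis by (rule filterlim_mono) (simp_all add: at_within_le_at)
  qed
  ultimately have L1: "(\<lambda>k. norm ((phi (?c (inverse (real (Suc k)))) - phi (?c 0)) - (inverse (real (Suc k)) - 0) *\<^sub>R V)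
      / norm (inverse (real (Suc k)) - 0)) \<longlonglongrightarrow> 0"
    by (rule filterlim_compose)
  have eqk: "norm ((phi (?c (inverse (real (Suc k)))) - phi (?c 0)) - (inverse (real (Suc k)) - 0) *\<^sub>R V)
      / norm (inverse (real (Suc k)) - 0)
    = norm (real (Suc k) *\<^sub>R (phi (w + inverse (real (Suc k)) *\<^sub>R \<xi>, \<xi>) - phi (w, \<xi>)) - V)" for k
  proof -
    define a where "a = phi (w + inverse (real (Suc k)) *\<^sub>R \<xi>, \<xi>) - phi (w, \<xi>)"
    define c where "c = inverse (real (Suc k))"
    define n where "n = real (Suc k)"
    have cn: "n * c = 1" "c > 0" "n > 0" unfolding c_def n_def by simp_all
    have "norm ((phi (?c (inverse (real (Suc k)))) - phi (?c 0)) - (inverse (real (Suc k)) - 0) *\<^sub>R V)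
      / norm (inverse (real (Suc k)) - 0) = norm (a - c *\<^sub>R V) / c"
      unfolding a_def c_def by simp
    also have "\<dots> = norm (a - c *\<^sub>R V) * n" using cn by (simp add: field_simps)
    also have "n *\<^sub>R a - V = n *\<^sub>R (a - c *\<^sub>R V)" using cn by (simp add: scaleR_diff_right)
    then have "norm (a - c *\<^sub>R V) * n = norm (n *\<^sub>R a - V)" using cn by simp
    finally show ?thesis unfolding a_def n_def .
  qed
  have "(\<lambda>k. norm (real (Suc k) *\<^sub>R (phi (w + inverse (real (Suc k)) *\<^sub>R \<xi>, \<xi>) - phi (w, \<xi>)) - V)) \<longlonglongrightarrow> 0"
    using L1 by (simp only: eqk)
  then have "(\<lambda>k. real (Suc k) *\<^sub>R (phi (w + inverse (real (Suc k)) *\<^sub>R \<xi>, \<xi>) - phi (w, \<xi>)) - V) \<longlonglongrightarrow> 0"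
    by (rule tendsto_norm_zero_cancel)
  then show ?thesis unfolding pd by (rule LIM_zero_cancel)
qed

definition phidt :: "(real^'n) \<times> (real^'n) \<Rightarrow> real^'n" where
  "phidt p = (if p \<in> A then phidot phi (snd p) (fst p) else 0)"

lemma phidt_meas[measurable]: "phidt \<in> borel_measurable borel"
proof (rule borel_measurable_LIMSEQ_metric)
  let ?D = "\<lambda>k p. if p \<in> A \<and> (fst p + inverse (real (Suc k)) *\<^sub>R snd p, snd p) \<in> A
     then real (Suc k) *\<^sub>R (phit (fst p + inverse (real (Suc k)) *\<^sub>R snd p, snd p) - phit p) else 0"
  show "?D k \<in> borel_measurable borel" for k by measurable
  fix p :: "(real^'n) \<times> (real^'n)"
  show "(\<lambda>k. ?D k p) \<longlonglongrightarrow> phidt p"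
  proof (cases "p \<in> A")
    case False
    then show ?thesis unfolding phidt_def by simp
  next
    case True
    obtain w \<xi> where p: "p = (w, \<xi>)" by (cases p)
    have \<xi>: "\<xi> \<in> S" using True p A_sub by blast
    have wA: "w \<in> Acyl \<rho> \<tau> \<xi>" using True p A_slice[OF \<xi>] by blast
    obtain e where e: "e > 0" "ball w e \<subseteq> Acyl \<rho> \<tau> \<xi>" using Acyl_open[OF \<xi>] wA open_contains_ball by blast
    obtain N where N: "inverse (real (Suc N)) < e" using e(1) reals_Archimedean by blast
    have ev: "\<forall>\<^sub>F k in sequentially. real (Suc k) *\<^sub>R (phi (w + inverse (real (Suc k)) *\<^sub>R \<xi>, \<xi>) - phi (w, \<xi>)) = ?D k p"
      unfolding eventually_sequentially
    proof (intro exI[of _ N] allI impI)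
      fix k assume k: "N \<le> k"
      have i: "inverse (real (Suc k)) \<le> inverse (real (Suc N))" using k by (intro le_imp_inverse_le) auto
      have "norm (inverse (real (Suc k)) *\<^sub>R \<xi>) = inverse (real (Suc k))" using \<xi> by simp
      then have "norm (inverse (real (Suc k)) *\<^sub>R \<xi>) < e" using N i by linarith
      then have "w + inverse (real (Suc k)) *\<^sub>R \<xi> \<in> ball w e" by (simp add: dist_norm)
      then have A2: "(w + inverse (real (Suc k)) *\<^sub>R \<xi>, \<xi>) \<in> A" using e(2) A_slice[OF \<xi>] by blast
      show "real (Suc k) *\<^sub>R (phi (w + inverse (real (Suc k)) *\<^sub>R \<xi>, \<xi>) - phi (w, \<xi>)) = ?D k p"
        using A2 True p unfolding phit_def by simp
    qed
    have "phidt p = phidot phi \<xi> w" using True p unfolding phidt_def by simp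
    then show ?thesis using Lim_transform_eventually[OF phidot_seq[OF True[unfolded p]] ev] by simp
  qed
qed

definition ut :: "real^'n \<Rightarrow> real^'m" where "ut x = (if x \<in> \<Omega> then u x else 0)"

lemma ut_meas[measurable]: "ut \<in> borel_measurable borel"
proof -
  have "\<Omega> \<inter> space borel \<in> sets borel" using \<Omega>_open by simp
  then have "(\<lambda>x. indicator \<Omega> x *\<^sub>R u x) \<in> borel_measurable borel"
    using u_b borel_measurable_restrict_space_iff by blast
  moreover have "(\<lambda>x. indicator \<Omega> x *\<^sub>R u x) = ut" unfolding ut_def by (auto simp: indicator_def)
  ultimately show ?thesis by simp
qed

definition gt :: "(real^'n) \<times> (real^'n) \<Rightarrow> real^'m" where
  "gt q = (if q \<in> \<Omega> \<times> UNIV then g (fst q) (snd q) else 0)"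

lemma gt_meas[measurable]: "gt \<in> borel_measurable borel"
proof -
  have o: "open (\<Omega> \<times> (UNIV :: (real^'n) set))" using \<Omega>_open by (intro open_Times) auto
  have "continuous_on (\<Omega> \<times> UNIV) (\<lambda>q. g (fst q) (snd q))"
    using g_c by (simp add: case_prod_beta')
  then show ?thesis unfolding gt_def
    by (intro borel_measurable_continuous_on_if continuous_on_const) (use o in auto)
qed

end

lemma jumpset_local:
  fixes f h :: "real \<Rightarrow> real"
  assumes d: "\<delta> > 0" and eq: "\<And>s. \<bar>s - t\<bar> < \<delta> \<Longrightarrow> f s = h s"
  shows "t \<in> jumpset f \<longleftrightarrow> t \<in> jumpset h"
proof -
  have R: "aplim_right f t a \<longleftrightarrow> aplim_right h t a" for a
    unfolding aplim_right_def
  proof (intro all_cong imp_cong refl tendsto_cong)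
    fix e :: real
    show "\<forall>\<^sub>F r in at_right 0. measure lebesgue {s. t < s \<and> s < t + r \<and> e < \<bar>f s - a\<bar>} / r =
        measure lebesgue {s. t < s \<and> s < t + r \<and> e < \<bar>h s - a\<bar>} / r"
      unfolding eventually_at_right_field
    proof (intro exI[of _ \<delta>] conjI allI impI)
      fix r :: real assume "0 < r" "r < \<delta>"
      then have "{s. t < s \<and> s < t + r \<and> e < \<bar>f s - a\<bar>} = {s. t < s \<and> s < t + r \<and> e < \<bar>h s - a\<bar>}"
        using eq by (auto simp: abs_if)
      then show "measure lebesgue {s. t < s \<and> s < t + r \<and> e < \<bar>f s - a\<bar>} / r =
        measure lebesgue {s. t < s \<and> s < t + r \<and> e < \<bar>h s - a\<bar>} / r" by simp
    qed (rule d)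
  qed
  have L: "aplim_left f t a \<longleftrightarrow> aplim_left h t a" for a
    unfolding aplim_left_def
  proof (intro all_cong imp_cong refl tendsto_cong)
    fix e :: real
    show "\<forall>\<^sub>F r in at_right 0. measure lebesgue {s. t - r < s \<and> s < t \<and> e < \<bar>f s - a\<bar>} / r =
        measure lebesgue {s. t - r < s \<and> s < t \<and> e < \<bar>h s - a\<bar>} / r"
      unfolding eventually_at_right_field
    proof (intro exI[of _ \<delta>] conjI allI impI)
      fix r :: real assume "0 < r" "r < \<delta>"
      then have "{s. t - r < s \<and> s < t \<and> e < \<bar>f s - a\<bar>} = {s. t - r < s \<and> s < t \<and> e < \<bar>h s - a\<bar>}"
        using eq by (auto simp: abs_if)
      then show "measure lebesgue {s. t - r < s \<and> s < t \<and> e < \<bar>f s - a\<bar>} / r =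
        measure lebesgue {s. t - r < s \<and> s < t \<and> e < \<bar>h s - a\<bar>} / r" by simp
    qed (rule d)
  qed
  show ?thesis unfolding jumpset_def using R L by simp
qed

context setting begin

lemma Omega_borel[measurable]: "\<Omega> \<in> sets borel" using \<Omega>_open by simp

lemma Z_meas'[measurable]: "Z \<in> borel_measurable borel" by (rule Z_meas)

definition W :: "(real^'n) \<times> (real^'n) \<Rightarrow> real \<Rightarrow> real^'n" where
  "W p s = Z p + (s - Z p \<bullet> snd p) *\<^sub>R snd p"

definition fT :: "(real^'n) \<times> (real^'n) \<Rightarrow> real \<Rightarrow> real" where
  "fT p s = (if (W p s, snd p) \<in> A \<and> phit (W p s, snd p) \<in> \<Omega>
     then ut (phit (W p s, snd p)) \<bullet> gt (phit (W p s, snd p), phidt (W p s, snd p)) else 0)"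

definition tau :: "(real^'n) \<times> (real^'n) \<Rightarrow> real" where
  "tau p = Z p \<bullet> snd p"

lemma fT_meas: "(\<lambda>q. fT (fst q) (snd q)) \<in> borel_measurable (borel \<Otimes>\<^sub>M lborel)"
  unfolding fT_def W_def by measurable

lemma tau_meas: "tau \<in> borel_measurable borel"
  unfolding tau_def by measurable

lemma fT_local:
  assumes x: "x \<in> \<Omega>" and \<xi>: "\<xi> \<in> S"
  shows "\<exists>\<delta>>0. \<forall>s. \<bar>s - tau (x, \<xi>)\<bar> < \<delta> \<longrightarrow> fT (x, \<xi>) s = slice u g phi \<xi> (P \<xi> x) s"
proof -
  let ?p = "(x, \<xi>)"
  define z where "z = pinv \<xi> x"
  have Zp: "Z ?p = z" unfolding Z_def z_def using x \<xi> by simp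
  have Wp: "W ?p s = P \<xi> x + s *\<^sub>R \<xi>" for s
    unfolding W_def Zp using P_eq[OF \<xi> x] unfolding z_def[symmetric] by (simp add: algebra_simps)
  have taup: "tau ?p = z \<bullet> \<xi>" unfolding tau_def Zp by simp
  let ?\<gamma> = "\<lambda>s. (W ?p s, \<xi>)"
  have gcont: "continuous_on UNIV ?\<gamma>" unfolding W_def by (intro continuous_intros)
  define G where "G = ?\<gamma> -` Oo"
  have Gopen: "open G" unfolding G_def
    by (rule continuous_open_vimage[OF O_props(1)]) (unfold W_def, intro continuous_intros)
  have GA: "?\<gamma> s \<in> A" if "s \<in> G" for s
  proof -
    have "?\<gamma> s \<in> Oo" using that unfolding G_def by simp
    moreover have "?\<gamma> s \<in> UNIV \<times> S" using \<xi> by simp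
    ultimately show ?thesis using O_props(2) by blast
  qed
  have ccomp: "continuous_on G (\<lambda>s. phi (?\<gamma> s))"
    by (rule continuous_on_compose2[OF phi_cont continuous_on_subset[OF gcont]]) (use GA in auto)
  define H where "H = (\<lambda>s. phi (?\<gamma> s)) -` \<Omega> \<inter> G"
  have Hopen: "open H" unfolding H_def using ccomp Gopen \<Omega>_open continuous_on_open_vimage by blast
  have Wt: "W ?p (z \<bullet> \<xi>) = z" unfolding W_def Zp by simp
  have zA: "(z, \<xi>) \<in> A" using pinv_A[OF \<xi> x] unfolding z_def .
  have zO: "(z, \<xi>) \<in> Oo" using zA O_props(2) by blast
  have "tau ?p \<in> G" unfolding taup G_def using Wt zO by simp
  moreover have "phi (?\<gamma> (tau ?p)) \<in> \<Omega>"
  proof -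
    have "phi (?\<gamma> (tau ?p)) = phi (z, \<xi>)" unfolding taup Wt ..
    also have "\<dots> = x" unfolding z_def by (rule pinv_eq[OF \<xi> x])
    finally show ?thesis using x by simp
  qed
  ultimately have tH: "tau ?p \<in> H" unfolding H_def by simp
  obtain d where d: "d > 0" "ball (tau ?p) d \<subseteq> H" using Hopen tH open_contains_ball by blast
  show ?thesis
  proof (intro exI[of _ d] conjI allI impI d(1))
    fix s assume s: "\<bar>s - tau ?p\<bar> < d"
    then have "s \<in> H" using d(2) by (auto simp: dist_real_def abs_minus_commute)
    then have sA: "?\<gamma> s \<in> A" and sO: "phi (?\<gamma> s) \<in> \<Omega>" unfolding H_def using GA by auto
    have "fT ?p s = u (phi (?\<gamma> s)) \<bullet> g (phi (?\<gamma> s)) (phidot phi \<xi> (W ?p s))"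
      unfolding fT_def phit_def phidt_def ut_def gt_def using sA sO by simp
    then show "fT ?p s = slice u g phi \<xi> (P \<xi> x) s" unfolding slice_def Wp by simp
  qed
qed

lemma Ahat_eq: "Ahat \<Omega> u g P \<rho> \<tau> phi = {p \<in> space borel. tau p \<in> jumpset (fT p)} \<inter> (\<Omega> \<times> S)"
proof (intro equalityI subsetI)
  fix p assume p: "p \<in> Ahat \<Omega> u g P \<rho> \<tau> phi"
  then obtain x \<xi> where px: "p = (x, \<xi>)" "x \<in> \<Omega>" "\<xi> \<in> S"
    "tx \<rho> \<tau> phi \<xi> x \<in> jumpset (slice u g phi \<xi> (P \<xi> x))"
    unfolding Ahat_def dirjump_def by blast
  have tt: "tx \<rho> \<tau> phi \<xi> x = tau (x, \<xi>)" unfolding tx_eq tau_def Z_def using px by simp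
  obtain d where d: "d > 0" "\<forall>s. \<bar>s - tau (x, \<xi>)\<bar> < d \<longrightarrow> fT (x, \<xi>) s = slice u g phi \<xi> (P \<xi> x) s"
    using fT_local[OF px(2,3)] by blast
  have "tau (x, \<xi>) \<in> jumpset (fT (x, \<xi>))"
    using px(4) unfolding tt using jumpset_local[OF d(1), of "tau (x, \<xi>)" "fT (x, \<xi>)"] d(2) by blast
  then show "p \<in> {p \<in> space borel. tau p \<in> jumpset (fT p)} \<inter> (\<Omega> \<times> S)" using px by simp
next
  fix p assume p: "p \<in> {p \<in> space borel. tau p \<in> jumpset (fT p)} \<inter> (\<Omega> \<times> S)"
  then obtain x \<xi> where px: "p = (x, \<xi>)" "x \<in> \<Omega>" "\<xi> \<in> S" "tau (x, \<xi>) \<in> jumpset (fT (x, \<xi>))"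
    by auto
  have tt: "tx \<rho> \<tau> phi \<xi> x = tau (x, \<xi>)" unfolding tx_eq tau_def Z_def using px by simp
  obtain d where d: "d > 0" "\<forall>s. \<bar>s - tau (x, \<xi>)\<bar> < d \<longrightarrow> fT (x, \<xi>) s = slice u g phi \<xi> (P \<xi> x) s"
    using fT_local[OF px(2,3)] by blast
  have "tx \<rho> \<tau> phi \<xi> x \<in> jumpset (slice u g phi \<xi> (P \<xi> x))"
    unfolding tt using px(4) jumpset_local[OF d(1), of "tau (x, \<xi>)" "fT (x, \<xi>)"] d(2) by blast
  then show "p \<in> Ahat \<Omega> u g P \<rho> \<tau> phi" unfolding Ahat_def dirjump_def using px by simp
qed

lemma Ahat_borel: "Ahat \<Omega> u g P \<rho> \<tau> phi \<in> sets borel"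
proof -
  have "{p \<in> space borel. tau p \<in> jumpset (fT p)} \<in> sets borel"
    by (rule jump_meas[OF fT_meas tau_meas])
  then show ?thesis unfolding Ahat_eq using OmS_borel by (rule sets.Int)
qed

lemma dirjump_borel:
  assumes \<xi>: "\<xi> \<in> S"
  shows "dirjump \<Omega> u g P \<rho> \<tau> phi \<xi> \<in> sets borel"
proof -
  have "(\<lambda>x. (x, \<xi>)) \<in> borel_measurable borel"
    by (rule borel_measurable_continuous_onI) (intro continuous_intros)
  then have "(\<lambda>x. (x, \<xi>)) -` Ahat \<Omega> u g P \<rho> \<tau> phi \<inter> space borel \<in> sets borel"
    using Ahat_borel by (rule measurable_sets)
  moreover have "(\<lambda>x. (x, \<xi>)) -` Ahat \<Omega> u g P \<rho> \<tau> phi \<inter> space borel = dirjump \<Omega> u g P \<rho> \<tau> phi \<xi>"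
    unfolding Ahat_def using \<xi> by (auto simp: dirjump_def)
  ultimately show ?thesis by simp
qed

end

theorem lemma4p4:
  fixes \<Omega> :: "(real^'n) set"
    and u :: "real^'n \<Rightarrow> real^'m"
    and F :: "real^'n \<Rightarrow> real^'n \<Rightarrow> real^'n"
    and g :: "real^'n \<Rightarrow> real^'n \<Rightarrow> real^'m"
    and P :: "real^'n \<Rightarrow> real^'n \<Rightarrow> real^'n"
    and \<rho> \<tau> :: real
    and A :: "((real^'n) \<times> (real^'n)) set"
    and phi :: "(real^'n) \<times> (real^'n) \<Rightarrow> real^'n"
  assumes F_smooth: "Cinf_on UNIV (\<lambda>(x, v). F x v)"
    and F_hom: "\<forall>x v \<alpha>. F x (\<alpha> *\<^sub>R v) = \<alpha>\<^sup>2 *\<^sub>R F x v"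
    and g_cont: "continuous_on (\<Omega> \<times> UNIV) (\<lambda>(x, v). g x v)"
    and \<Omega>_open: "open \<Omega>"
    and u_borel: "u \<in> borel_measurable (restrict_space borel \<Omega>)"
    and curv: "curvilinear_projections F \<Omega> P \<rho> \<tau> A phi"
  shows "(\<forall>\<xi>\<in>sphere 0 1. dirjump \<Omega> u g P \<rho> \<tau> phi \<xi> \<in> sets borel)
         \<and> Ahat \<Omega> u g P \<rho> \<tau> phi \<in> sets borel"
proof -
  have c1: "A \<subseteq> UNIV \<times> sphere 0 1" and c2: "openin (top_of_set (UNIV \<times> sphere 0 1)) A"
    and c3: "\<forall>\<xi>\<in>sphere 0 1. {z. (z, \<xi>) \<in> A} = Acyl \<rho> \<tau> \<xi>" and c4: "smooth_mfd A phi"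
    using curv unfolding curvilinear_projections_def by simp_all
  have c5: "\<forall>\<xi>\<in>sphere 0 1.
        \<Omega> \<subseteq> (\<lambda>z. phi (z, \<xi>)) ` Acyl \<rho> \<tau> \<xi> \<and>
        inj_on (\<lambda>z. phi (z, \<xi>)) {z \<in> Acyl \<rho> \<tau> \<xi>. phi (z, \<xi>) \<in> \<Omega>} \<and>
        (\<forall>y t. y \<in> perp \<xi> \<and> norm y < \<rho> \<and> \<bar>t\<bar> < \<tau> \<and> phi (y + t *\<^sub>R \<xi>, \<xi>) \<in> \<Omega> \<longrightarrow>
            P \<xi> (phi (y + t *\<^sub>R \<xi>, \<xi>)) = y)"
    using curv unfolding curvilinear_projections_def by simp
  interpret setting \<Omega> u g P \<rho> \<tau> A phi
  proof
    show "open \<Omega>" by fact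
    show "u \<in> borel_measurable (restrict_space borel \<Omega>)" by fact
    show "continuous_on (\<Omega> \<times> UNIV) (\<lambda>(x, v). g x v)" by fact
    show "A \<subseteq> UNIV \<times> sphere 0 1" by fact
    show "openin (top_of_set (UNIV \<times> sphere 0 1)) A" by fact
    show "smooth_mfd A phi" by fact
    fix \<xi> assume \<xi>: "\<xi> \<in> sphere (0::real^'n) 1"
    show "{z. (z, \<xi>) \<in> A} = Acyl \<rho> \<tau> \<xi>" using c3 \<xi> by blast
    show "\<Omega> \<subseteq> (\<lambda>z. phi (z, \<xi>)) ` Acyl \<rho> \<tau> \<xi>" using c5 \<xi> by blast
    show "inj_on (\<lambda>z. phi (z, \<xi>)) {z \<in> Acyl \<rho> \<tau> \<xi>. phi (z, \<xi>) \<in> \<Omega>}" using c5 \<xi> by blast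
  next
    fix \<xi> y t assume "\<xi> \<in> sphere (0::real^'n) 1" "y \<in> perp \<xi>" "norm y < \<rho>" "\<bar>t\<bar> < \<tau>"
      "phi (y + t *\<^sub>R \<xi>, \<xi>) \<in> \<Omega>"
    then show "P \<xi> (phi (y + t *\<^sub>R \<xi>, \<xi>)) = y" using c5 by blast
  qed
  show ?thesis using Ahat_borel dirjump_borel by blast
qed

end
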